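(* Let $k \geq 1$ be an integer. Every outerplanar graph of girth at least $2k$ admits a homomorphism to the cycle $C_{2k+1}$.
   Context: A graph homomorphism from $G$ to $H$ is a map $f : V(G) \to V(H)$ such that $f(u)f(v) \in E(H)$ whenever $uv \in E(G)$. The girth of a graph is the length of a shortest cycle (infinite if acyclic). $C_m$ is the cycle on $m$ vertices. *)

theory Defs
  imports "HOL-Analysis.Analysis"
begin

definition simple_graph :: "'a set \<Rightarrow> ('a \<Rightarrow> 'a \<Rightarrow> bool) \<Rightarrow> bool" where
  "simple_graph V E \<longleftrightarrow> finite V \<and> (\<forall>u v. E u v \<longrightarrow> u \<in> V \<and> v \<in> V)
     \<and> (\<forall>u v. E u v \<longrightarrow> E v u) \<and> (\<forall>v. \<not> E v v)"

definition plane_drawing ::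
  "'a set \<Rightarrow> ('a \<Rightarrow> 'a \<Rightarrow> bool) \<Rightarrow> ('a \<Rightarrow> complex) \<Rightarrow> ('a \<Rightarrow> 'a \<Rightarrow> real \<Rightarrow> complex) \<Rightarrow> bool" where
  "plane_drawing V E p g \<longleftrightarrow>
     inj_on p V
     \<and> (\<forall>u v. E u v \<longrightarrow> arc (g u v) \<and> pathstart (g u v) = p u \<and> pathfinish (g u v) = p v
                      \<and> g v u = reversepath (g u v))
     \<and> (\<forall>u v w. E u v \<and> w \<in> V \<and> w \<noteq> u \<and> w \<noteq> v \<longrightarrow> p w \<notin> path_image (g u v))
     \<and> (\<forall>u v x y. E u v \<and> E x y \<and> {u, v} \<noteq> {x, y} \<longrightarrow>
           path_image (g u v) \<inter> path_image (g x y) \<subseteq> p ` ({u, v} \<inter> {x, y}))"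

definition drawing_set ::
  "'a set \<Rightarrow> ('a \<Rightarrow> 'a \<Rightarrow> bool) \<Rightarrow> ('a \<Rightarrow> complex) \<Rightarrow> ('a \<Rightarrow> 'a \<Rightarrow> real \<Rightarrow> complex) \<Rightarrow> complex set" where
  "drawing_set V E p g = p ` V \<union> \<Union> {path_image (g u v) | u v. E u v}"

text \<open>Outerplanar: a finite simple graph having a plane drawing in which every vertex lies on
  the boundary of the outer (unbounded) face, i.e. in the closure of the outside of the drawing.\<close>
definition outerplanar :: "'a set \<Rightarrow> ('a \<Rightarrow> 'a \<Rightarrow> bool) \<Rightarrow> bool" where
  "outerplanar V E \<longleftrightarrow> simple_graph V E \<and>
     (\<exists>p g. plane_drawing V E p g \<and>
            (\<forall>v\<in>V. p v \<in> closure (outside (drawing_set V E p g))))"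

definition is_cycle :: "'a set \<Rightarrow> ('a \<Rightarrow> 'a \<Rightarrow> bool) \<Rightarrow> 'a list \<Rightarrow> bool" where
  "is_cycle V E cs \<longleftrightarrow> length cs \<ge> 3 \<and> distinct cs \<and> set cs \<subseteq> V
     \<and> (\<forall>i < length cs. E (cs ! i) (cs ! ((i + 1) mod length cs)))"

definition girth_at_least :: "'a set \<Rightarrow> ('a \<Rightarrow> 'a \<Rightarrow> bool) \<Rightarrow> nat \<Rightarrow> bool" where
  "girth_at_least V E g \<longleftrightarrow> (\<forall>cs. is_cycle V E cs \<longrightarrow> length cs \<ge> g)"

definition cycle_graph_adj :: "nat \<Rightarrow> nat \<Rightarrow> nat \<Rightarrow> bool" where
  "cycle_graph_adj m i j \<longleftrightarrow> i < m \<and> j < m \<and> (j = (i + 1) mod m \<or> i = (j + 1) mod m)"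

definition graph_hom :: "'a set \<Rightarrow> ('a \<Rightarrow> 'a \<Rightarrow> bool) \<Rightarrow> 'b set \<Rightarrow> ('b \<Rightarrow> 'b \<Rightarrow> bool) \<Rightarrow> ('a \<Rightarrow> 'b) \<Rightarrow> bool" where
  "graph_hom V E W F f \<longleftrightarrow> (\<forall>v\<in>V. f v \<in> W) \<and> (\<forall>u v. E u v \<longrightarrow> F (f u) (f v))"

end

theory Submission
  imports Defs
begin

lemma conn_split:
  fixes S :: "'b::topological_space set"
  assumes "connected S" "open A" "open B" "A \<inter> B = {}" "S \<subseteq> A \<union> B"
  shows "S \<subseteq> A \<or> S \<subseteq> B"
  using connectedD[OF assms(1,2,3)] assms(4,5) by blast

lemma theta_jordan:
  fixes c d :: "real \<Rightarrow> complex"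
  assumes "arc c" "arc d" "pathstart c = a" "pathfinish c = b" "pathstart d = a" "pathfinish d = b"
    "path_image c \<inter> path_image d = {a,b}"
  shows "inside(path_image c \<union> path_image d) \<noteq> {} \<and>
          open(inside(path_image c \<union> path_image d)) \<and>
          connected(inside(path_image c \<union> path_image d)) \<and>
          open(outside(path_image c \<union> path_image d)) \<and>
          connected(outside(path_image c \<union> path_image d)) \<and>
          bounded(inside(path_image c \<union> path_image d)) \<and>
          frontier(inside(path_image c \<union> path_image d)) = path_image c \<union> path_image d \<and>
          frontier(outside(path_image c \<union> path_image d)) = path_image c \<union> path_image d"
proof -
  have sp: "simple_path (c +++ reversepath d)"
    using assms by (subst simple_path_join_loop_eq) (auto simp: arc_reversepath)
  have im: "path_image (c +++ reversepath d) = path_image c \<union> path_image d"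
    using assms by (simp add: path_image_join)
  have lp: "pathfinish (c +++ reversepath d) = pathstart (c +++ reversepath d)"
    using assms by simp
  show ?thesis using Jordan_inside_outside[OF sp lp] unfolding im by blast
qed

lemma theta_pair:
  fixes c d e :: "real \<Rightarrow> complex"
  assumes arcs: "arc c" "arc d" "arc e"
    and ends: "pathstart c = a" "pathfinish c = b" "pathstart d = a" "pathfinish d = b"
      "pathstart e = a" "pathfinish e = b"
    and ab: "a \<noteq> b"
    and cd: "path_image c \<inter> path_image d = {a,b}"
    and ce: "path_image c \<inter> path_image e = {a,b}"
    and de: "path_image d \<inter> path_image e = {a,b}"
    and hd: "path_image d - {a,b} \<subseteq> outside(path_image c \<union> path_image e)"
    and he: "path_image e - {a,b} \<subseteq> outside(path_image c \<union> path_image d)"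
  shows "inside(path_image c \<union> path_image d) \<subseteq> outside(path_image c \<union> path_image e)"
proof -
  let ?Tc = "path_image c" and ?Td = "path_image d" and ?Te = "path_image e"
  note Jcd = theta_jordan[OF arcs(1,2) ends(1-4) cd]
  note Jce = theta_jordan[OF arcs(1,3) ends(1,2,5,6) ce]
  have abc: "a \<in> ?Tc" "b \<in> ?Tc" using ends by auto
  have i1: "inside(?Tc \<union> ?Td) \<inter> ?Te = {}"
  proof -
    { fix x assume x: "x \<in> inside(?Tc \<union> ?Td)" "x \<in> ?Te"
      then have "x \<notin> ?Tc \<union> ?Td" using inside_no_overlap by blast
      then have "x \<noteq> a" "x \<noteq> b" using abc by auto
      then have "x \<in> outside(?Tc \<union> ?Td)" using he x by blast
      then have False using x inside_Int_outside by blast }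
    then show ?thesis by blast
  qed
  have i2: "inside(?Tc \<union> ?Te) \<inter> ?Td = {}"
  proof -
    { fix x assume x: "x \<in> inside(?Tc \<union> ?Te)" "x \<in> ?Td"
      then have "x \<notin> ?Tc \<union> ?Te" using inside_no_overlap by blast
      then have "x \<noteq> a" "x \<noteq> b" using abc by auto
      then have "x \<in> outside(?Tc \<union> ?Te)" using hd x by blast
      then have False using x inside_Int_outside by blast }
    then show ?thesis by blast
  qed
  have s1: "inside(?Tc \<union> ?Td) \<subseteq> inside(?Tc \<union> ?Te) \<or> inside(?Tc \<union> ?Td) \<subseteq> outside(?Tc \<union> ?Te)"
  proof (rule conn_split)
    show "connected (inside (?Tc \<union> ?Td))" using Jcd by blast
    show "open (inside (?Tc \<union> ?Te))" "open (outside (?Tc \<union> ?Te))" using Jce by blast+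
    show "inside (?Tc \<union> ?Te) \<inter> outside (?Tc \<union> ?Te) = {}" by simp
    have "inside(?Tc \<union> ?Td) \<subseteq> - (?Tc \<union> ?Te)" using i1 inside_no_overlap by blast
    then show "inside (?Tc \<union> ?Td) \<subseteq> inside (?Tc \<union> ?Te) \<union> outside (?Tc \<union> ?Te)" by simp
  qed
  have s2: "inside(?Tc \<union> ?Te) \<subseteq> inside(?Tc \<union> ?Td) \<or> inside(?Tc \<union> ?Te) \<subseteq> outside(?Tc \<union> ?Td)"
  proof (rule conn_split)
    show "connected (inside (?Tc \<union> ?Te))" using Jce by blast
    show "open (inside (?Tc \<union> ?Td))" "open (outside (?Tc \<union> ?Td))" using Jcd by blast+
    show "inside (?Tc \<union> ?Td) \<inter> outside (?Tc \<union> ?Td) = {}" by simp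
    have "inside(?Tc \<union> ?Te) \<subseteq> - (?Tc \<union> ?Td)" using i2 inside_no_overlap by blast
    then show "inside (?Tc \<union> ?Te) \<subseteq> inside (?Tc \<union> ?Td) \<union> outside (?Tc \<union> ?Td)" by simp
  qed
  show ?thesis
  proof (rule ccontr)
    assume nq: "\<not> ?thesis"
    then have sub: "inside(?Tc \<union> ?Td) \<subseteq> inside(?Tc \<union> ?Te)" using s1 by blast
    show False
    proof (cases "inside(?Tc \<union> ?Te) \<subseteq> inside(?Tc \<union> ?Td)")
      case True
      then have "inside(?Tc \<union> ?Te) = inside(?Tc \<union> ?Td)" using sub by blast
      then have "?Tc \<union> ?Te = ?Tc \<union> ?Td" using Jcd Jce by metis
      moreover obtain x where "x \<in> ?Td - {a,b}"
        using nonempty_simple_path_endless[OF arc_imp_simple_path[OF arcs(2)]] ends by auto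
      ultimately show False using cd de by blast
    next
      case False
      then have "inside(?Tc \<union> ?Te) \<subseteq> outside(?Tc \<union> ?Td)" using s2 by blast
      then have "inside(?Tc \<union> ?Td) \<subseteq> outside(?Tc \<union> ?Td)" using sub by blast
      then show False using Jcd inside_Int_outside by blast
    qed
  qed
qed

lemma endless_split:
  fixes c d e :: "real \<Rightarrow> complex"
  assumes "arc c" "arc d" "arc e"
    and ends: "pathstart c = a" "pathfinish c = b" "pathstart d = a" "pathfinish d = b"
      "pathstart e = a" "pathfinish e = b"
    and cd: "path_image c \<inter> path_image d = {a,b}"
    and ce: "path_image c \<inter> path_image e = {a,b}"
    and de: "path_image d \<inter> path_image e = {a,b}"
  shows "path_image e - {a,b} \<subseteq> inside(path_image c \<union> path_image d)
       \<or> path_image e - {a,b} \<subseteq> outside(path_image c \<union> path_image d)"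
proof (rule conn_split)
  note J = theta_jordan[OF assms(1,2) ends(1-4) cd]
  show "connected (path_image e - {a, b})"
    using connected_simple_path_endless[OF arc_imp_simple_path[OF assms(3)]] ends by simp
  show "open (inside (path_image c \<union> path_image d))" "open (outside (path_image c \<union> path_image d))"
    using J by blast+
  show "inside (path_image c \<union> path_image d) \<inter> outside (path_image c \<union> path_image d) = {}" by simp
  show "path_image e - {a, b} \<subseteq> inside (path_image c \<union> path_image d) \<union> outside (path_image c \<union> path_image d)"
    using ce de by auto
qed

lemma theta_inside:
  fixes c1 c2 c3 :: "real \<Rightarrow> complex"
  assumes arcs: "arc c1" "arc c2" "arc c3"
    and ends: "pathstart c1 = a" "pathfinish c1 = b" "pathstart c2 = a" "pathfinish c2 = b"
      "pathstart c3 = a" "pathfinish c3 = b"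
    and ab: "a \<noteq> b"
    and i12: "path_image c1 \<inter> path_image c2 = {a,b}"
    and i13: "path_image c1 \<inter> path_image c3 = {a,b}"
    and i23: "path_image c2 \<inter> path_image c3 = {a,b}"
  shows "path_image c3 - {a,b} \<subseteq> inside(path_image c1 \<union> path_image c2)
       \<or> path_image c1 - {a,b} \<subseteq> inside(path_image c2 \<union> path_image c3)
       \<or> path_image c2 - {a,b} \<subseteq> inside(path_image c1 \<union> path_image c3)"
proof (rule ccontr)
  let ?T1 = "path_image c1" and ?T2 = "path_image c2" and ?T3 = "path_image c3"
  assume nq: "\<not> ?thesis"
  have i21: "?T2 \<inter> ?T1 = {a,b}" and i31: "?T3 \<inter> ?T1 = {a,b}" and i32: "?T3 \<inter> ?T2 = {a,b}"
    using i12 i13 i23 by blast+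
  have u21: "?T2 \<union> ?T1 = ?T1 \<union> ?T2" and u31: "?T3 \<union> ?T1 = ?T1 \<union> ?T3" and u32: "?T3 \<union> ?T2 = ?T2 \<union> ?T3"
    by blast+
  have o3: "?T3 - {a,b} \<subseteq> outside(?T1 \<union> ?T2)"
    using endless_split[OF arcs(1,2,3) ends i12 i13 i23] nq by blast
  have o1: "?T1 - {a,b} \<subseteq> outside(?T2 \<union> ?T3)"
    using endless_split[OF arcs(2,3,1) ends(3-6,1,2) i23 i21 i31] nq by blast
  have o2: "?T2 - {a,b} \<subseteq> outside(?T1 \<union> ?T3)"
    using endless_split[OF arcs(1,3,2) ends(1,2,5,6,3,4) i13 i12 i32] nq by blast
  have P12: "inside(?T1 \<union> ?T2) \<subseteq> outside(?T1 \<union> ?T3)"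
    by (rule theta_pair[OF arcs(1,2,3) ends ab i12 i13 i23 o2 o3])
  have P13: "inside(?T1 \<union> ?T3) \<subseteq> outside(?T1 \<union> ?T2)"
    by (rule theta_pair[OF arcs(1,3,2) ends(1,2,5,6,3,4) ab i13 i12 i32 o3 o2])
  have P23a: "inside(?T2 \<union> ?T3) \<subseteq> outside(?T1 \<union> ?T2)"
  proof -
    have o3': "?T3 - {a,b} \<subseteq> outside(?T2 \<union> ?T1)" using o3 u21 by simp
    show ?thesis using theta_pair[OF arcs(2,3,1) ends(3-6,1,2) ab i23 i21 i31 o3' o1] u21 by simp
  qed
  have P23b: "inside(?T2 \<union> ?T3) \<subseteq> outside(?T1 \<union> ?T3)"
  proof -
    have o2': "?T2 - {a,b} \<subseteq> outside(?T3 \<union> ?T1)" using o2 u31 by simp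
    have o1': "?T1 - {a,b} \<subseteq> outside(?T3 \<union> ?T2)" using o1 u32 by simp
    show ?thesis using theta_pair[OF arcs(3,2,1) ends(5,6,3,4,1,2) ab i32 i31 i21 o2' o1'] u31 u32 by simp
  qed
  note J12 = theta_jordan[OF arcs(1,2) ends(1-4) i12]
  note J13 = theta_jordan[OF arcs(1,3) ends(1,2,5,6) i13]
  note J23 = theta_jordan[OF arcs(2,3) ends(3-6) i23]
  have cl12: "closure(inside(?T1 \<union> ?T2)) = inside(?T1 \<union> ?T2) \<union> (?T1 \<union> ?T2)"
    using J12 closure_Un_frontier[of "inside(?T1 \<union> ?T2)"] by simp
  have cl13: "closure(inside(?T1 \<union> ?T3)) = inside(?T1 \<union> ?T3) \<union> (?T1 \<union> ?T3)"
    using J13 closure_Un_frontier[of "inside(?T1 \<union> ?T3)"] by simp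
  have co12: "- closure(inside(?T1 \<union> ?T2)) = outside(?T1 \<union> ?T2)"
    unfolding cl12 using inside_Un_outside[of "?T1 \<union> ?T2"] inside_Int_outside[of "?T1 \<union> ?T2"]
      outside_no_overlap[of "?T1 \<union> ?T2"] by blast
  have co13: "- closure(inside(?T1 \<union> ?T3)) = outside(?T1 \<union> ?T3)"
    unfolding cl13 using inside_Un_outside[of "?T1 \<union> ?T3"] inside_Int_outside[of "?T1 \<union> ?T3"]
      outside_no_overlap[of "?T1 \<union> ?T3"] by blast
  have int: "closure(inside(?T1 \<union> ?T2)) \<inter> closure(inside(?T1 \<union> ?T3)) = ?T1"
  proof -
    have A: "inside(?T1 \<union> ?T2) \<inter> (inside(?T1 \<union> ?T3) \<union> (?T1 \<union> ?T3)) = {}"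
      using P12 inside_Int_outside[of "?T1 \<union> ?T3"] outside_no_overlap[of "?T1 \<union> ?T3"] by blast
    have B: "?T2 \<inter> inside(?T1 \<union> ?T3) = {}"
      using P13 outside_no_overlap[of "?T1 \<union> ?T2"] by blast
    have C: "?T2 \<inter> ?T3 \<subseteq> ?T1" using i23 ends pathstart_in_path_image pathfinish_in_path_image
      by (metis empty_subsetI insert_subset)
    have "(inside(?T1 \<union> ?T2) \<union> (?T1 \<union> ?T2)) \<inter> (inside(?T1 \<union> ?T3) \<union> (?T1 \<union> ?T3)) \<subseteq> ?T1"
    proof
      fix x assume x: "x \<in> (inside(?T1 \<union> ?T2) \<union> (?T1 \<union> ?T2)) \<inter> (inside(?T1 \<union> ?T3) \<union> (?T1 \<union> ?T3))"
      show "x \<in> ?T1"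
      proof (cases "x \<in> inside(?T1 \<union> ?T2)")
        case True then show ?thesis using x A by blast
      next
        case False
        then have "x \<in> ?T1 \<or> x \<in> ?T2" using x by blast
        then show ?thesis using x B C by blast
      qed
    qed
    then show ?thesis unfolding cl12 cl13 by blast
  qed
  have conn: "connected (- (closure(inside(?T1 \<union> ?T2)) \<union> closure(inside(?T1 \<union> ?T3))))"
  proof (rule Janiszewski_connected)
    show "compact (closure (inside (?T1 \<union> ?T2)))" using J12 compact_closure by blast
    show "closed (closure (inside (?T1 \<union> ?T3)))" by simp
    show "connected (closure (inside (?T1 \<union> ?T2)) \<inter> closure (inside (?T1 \<union> ?T3)))"
      unfolding int using connected_arc_image[OF arcs(1)] .
    show "connected (- closure (inside (?T1 \<union> ?T2)))" unfolding co12 using J12 by blast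
    show "connected (- closure (inside (?T1 \<union> ?T3)))" unfolding co13 using J13 by blast
  qed
  then have conn2: "connected (outside(?T1 \<union> ?T2) \<inter> outside(?T1 \<union> ?T3))"
    using co12 co13 by (simp add: Compl_Un)
  have "outside(?T1 \<union> ?T2) \<inter> outside(?T1 \<union> ?T3) \<subseteq> inside(?T2 \<union> ?T3) \<or>
        outside(?T1 \<union> ?T2) \<inter> outside(?T1 \<union> ?T3) \<subseteq> outside(?T2 \<union> ?T3)"
  proof (rule conn_split[OF conn2])
    show "open (inside (?T2 \<union> ?T3))" "open (outside (?T2 \<union> ?T3))" using J23 by blast+
    show "inside (?T2 \<union> ?T3) \<inter> outside (?T2 \<union> ?T3) = {}" by simp
    have "outside(?T1 \<union> ?T2) \<inter> outside(?T1 \<union> ?T3) \<subseteq> - (?T2 \<union> ?T3)"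
      using outside_no_overlap[of "?T1 \<union> ?T2"] outside_no_overlap[of "?T1 \<union> ?T3"] by blast
    then show "outside (?T1 \<union> ?T2) \<inter> outside (?T1 \<union> ?T3) \<subseteq> inside (?T2 \<union> ?T3) \<union> outside (?T2 \<union> ?T3)"
      by simp
  qed
  then show False
  proof
    assume h: "outside(?T1 \<union> ?T2) \<inter> outside(?T1 \<union> ?T3) \<subseteq> inside(?T2 \<union> ?T3)"
    have "outside(?T1 \<union> ?T2 \<union> ?T3) \<subseteq> outside(?T1 \<union> ?T2) \<inter> outside(?T1 \<union> ?T3)"
      using outside_mono[of "?T1 \<union> ?T2" "?T1 \<union> ?T2 \<union> ?T3"] outside_mono[of "?T1 \<union> ?T3" "?T1 \<union> ?T2 \<union> ?T3"]
      by blast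
    moreover have "bounded (?T1 \<union> ?T2 \<union> ?T3)"
      using bounded_arc_image[OF arcs(1)] bounded_arc_image[OF arcs(2)] bounded_arc_image[OF arcs(3)] by simp
    ultimately have "bounded (outside(?T1 \<union> ?T2 \<union> ?T3))"
      using h J23 bounded_subset by (meson order_trans)
    then show False using unbounded_outside \<open>bounded (?T1 \<union> ?T2 \<union> ?T3)\<close> by blast
  next
    assume h: "outside(?T1 \<union> ?T2) \<inter> outside(?T1 \<union> ?T3) \<subseteq> outside(?T2 \<union> ?T3)"
    have "inside(?T2 \<union> ?T3) \<subseteq> outside(?T1 \<union> ?T2) \<inter> outside(?T1 \<union> ?T3)"
      using P23a P23b by blast
    then show False using h J23 inside_Int_outside by blast
  qed
qed



fun wpath :: "('a \<Rightarrow> 'a \<Rightarrow> bool) \<Rightarrow> 'a list \<Rightarrow> bool" where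
  "wpath E [] = True"
| "wpath E [x] = True"
| "wpath E (x#y#zs) = (E x y \<and> wpath E (y#zs))"

lemma wpath_nth: "wpath E xs \<longleftrightarrow> (\<forall>i. Suc i < length xs \<longrightarrow> E (xs!i) (xs!Suc i))"
proof (induction E xs rule: wpath.induct)
  case (3 E x y zs)
  show ?case
  proof
    assume "wpath E (x # y # zs)"
    then show "\<forall>i. Suc i < length (x # y # zs) \<longrightarrow> E ((x # y # zs) ! i) ((x # y # zs) ! Suc i)"
      using 3 by (auto simp: less_Suc_eq_0_disj)
  next
    assume h: "\<forall>i. Suc i < length (x # y # zs) \<longrightarrow> E ((x # y # zs) ! i) ((x # y # zs) ! Suc i)"
    have "E x y" using h[rule_format, of 0] by simp
    moreover have "\<forall>i. Suc i < length (y # zs) \<longrightarrow> E ((y # zs) ! i) ((y # zs) ! Suc i)"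
      using h by (metis Suc_less_eq length_Cons nth_Cons_Suc)
    ultimately show "wpath E (x # y # zs)" using 3 by simp
  qed
qed auto

lemma wpath_append:
  "wpath E (xs @ ys) \<longleftrightarrow> wpath E xs \<and> wpath E ys \<and> (xs \<noteq> [] \<and> ys \<noteq> [] \<longrightarrow> E (last xs) (hd ys))"
proof (induction xs rule: induct_list012)
  case (3 x y zs)
  then show ?case by simp
next
  case (2 x)
  then show ?case by (cases ys) auto
qed simp

lemma wpath_rev: "(\<forall>u v. E u v \<longrightarrow> E v u) \<Longrightarrow> wpath E (rev xs) = wpath E xs"
proof (induction xs rule: induct_list012)
  case (3 x y zs)
  then show ?case by (auto simp: wpath_append)
qed auto

lemma is_cycle_alt:
  "is_cycle V E cs \<longleftrightarrow> length cs \<ge> 3 \<and> distinct cs \<and> set cs \<subseteq> V \<and> wpath E cs \<and> E (last cs) (hd cs)"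
proof -
  have "(\<forall>i < length cs. E (cs ! i) (cs ! ((i + 1) mod length cs))) \<longleftrightarrow> wpath E cs \<and> E (last cs) (hd cs)"
    if "length cs \<ge> 3"
  proof -
    have ne: "cs \<noteq> []" using that by auto
    have l: "last cs = cs ! (length cs - 1)" "hd cs = cs ! 0" using ne by (auto simp: last_conv_nth hd_conv_nth)
    show ?thesis unfolding wpath_nth l
    proof safe
      fix i assume "\<forall>i<length cs. E (cs ! i) (cs ! ((i + 1) mod length cs))" "Suc i < length cs"
      then show "E (cs ! i) (cs ! Suc i)" by (metis Suc_eq_plus1 Suc_lessD mod_less)
    next
      assume "\<forall>i<length cs. E (cs ! i) (cs ! ((i + 1) mod length cs))"
      then have "E (cs ! (length cs - 1)) (cs ! ((length cs - 1 + 1) mod length cs))" using that by simp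
      moreover have "length cs - 1 + 1 = length cs" using that by simp
      ultimately show "E (cs ! (length cs - 1)) (cs ! 0)" by simp
    next
      fix i assume that: "\<forall>i. Suc i < length cs \<longrightarrow> E (cs ! i) (cs ! Suc i)" "E (cs ! (length cs - 1)) (cs ! 0)"
        "i < length cs"
      then show "E (cs ! i) (cs ! ((i + 1) mod length cs))"
      proof (cases "Suc i < length cs")
        case True then show ?thesis using that by simp
      next
        case False
        then have "Suc i = length cs" using \<open>i < length cs\<close> by simp
        then show ?thesis using that by (metis Suc_eq_plus1 diff_Suc_1 mod_self)
      qed
    qed
  qed
  then show ?thesis unfolding is_cycle_def by blast
qed



fun gpath :: "('a \<Rightarrow> complex) \<Rightarrow> ('a \<Rightarrow> 'a \<Rightarrow> real \<Rightarrow> complex) \<Rightarrow> 'a list \<Rightarrow> real \<Rightarrow> complex" where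
  "gpath p g [] = linepath 0 0"
| "gpath p g [x] = linepath (p x) (p x)"
| "gpath p g (x#y#zs) = (if zs = [] then g x y else g x y +++ gpath p g (y#zs))"

locale odraw =
  fixes V :: "'a set" and E :: "'a \<Rightarrow> 'a \<Rightarrow> bool" and p :: "'a \<Rightarrow> complex"
    and g :: "'a \<Rightarrow> 'a \<Rightarrow> real \<Rightarrow> complex"
  assumes sg: "simple_graph V E" and pd: "plane_drawing V E p g"
    and outer: "\<forall>v\<in>V. p v \<in> closure (outside (drawing_set V E p g))"
begin

lemma E_V: "E u v \<Longrightarrow> u \<in> V \<and> v \<in> V" using sg unfolding simple_graph_def by blast
lemma E_sym: "E u v \<Longrightarrow> E v u" using sg unfolding simple_graph_def by blast
lemma E_irr: "E u v \<Longrightarrow> u \<noteq> v" using sg unfolding simple_graph_def by blast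
lemma p_inj: "u \<in> V \<Longrightarrow> v \<in> V \<Longrightarrow> p u = p v \<Longrightarrow> u = v"
  using pd unfolding plane_drawing_def inj_on_def by blast

lemma edge_arc: "E u v \<Longrightarrow> arc (g u v) \<and> pathstart (g u v) = p u \<and> pathfinish (g u v) = p v"
  using pd unfolding plane_drawing_def by blast
lemma edge_img_sym: "E u v \<Longrightarrow> path_image (g v u) = path_image (g u v)"
  using pd unfolding plane_drawing_def by (metis path_image_reversepath)
lemma edge_int: "E u v \<Longrightarrow> E x y \<Longrightarrow> {u,v} \<noteq> {x,y} \<Longrightarrow>
    path_image (g u v) \<inter> path_image (g x y) \<subseteq> p ` ({u,v} \<inter> {x,y})"
  using pd unfolding plane_drawing_def by blast
lemma edge_vtx: "E u v \<Longrightarrow> w \<in> V \<Longrightarrow> p w \<in> path_image (g u v) \<Longrightarrow> w = u \<or> w = v"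
  using pd unfolding plane_drawing_def by blast
lemma edge_ends: "E u v \<Longrightarrow> p u \<in> path_image (g u v) \<and> p v \<in> path_image (g u v)"
  using edge_arc by (metis pathfinish_in_path_image pathstart_in_path_image)
lemma edge_draw: "E u v \<Longrightarrow> path_image (g u v) \<subseteq> drawing_set V E p g"
  unfolding drawing_set_def by blast

lemma outer_not_inside:
  assumes "w \<in> V" "closed K" "K \<subseteq> drawing_set V E p g"
  shows "p w \<notin> inside K"
proof
  assume a: "p w \<in> inside K"
  have "p w \<in> closure (outside K)"
    using outer assms(1) closure_mono[OF outside_mono[OF assms(3)]] by blast
  moreover have "inside K \<inter> closure (outside K) = {}"
    using open_Int_closure_eq_empty[OF open_inside[OF assms(2)]] inside_Int_outside by blast
  ultimately show False using a by blast
qed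

lemma gp_basic:
  assumes "wpath E xs" "length xs \<ge> 2"
  shows "pathstart (gpath p g xs) = p (hd xs) \<and> pathfinish (gpath p g xs) = p (last xs) \<and>
    path_image (gpath p g xs) = (\<Union>m < length xs - 1. path_image (g (xs!m) (xs!Suc m)))"
  using assms
proof (induction xs rule: induct_list012)
  case (3 x y zs)
  show ?case
  proof (cases "zs = []")
    case True
    then show ?thesis using 3 edge_arc[of x y] by (simp add: lessThan_Suc_eq_insert_0 del: lessThan_Suc)
  next
    case False
    have IH: "pathstart (gpath p g (y#zs)) = p y \<and> pathfinish (gpath p g (y#zs)) = p (last (y#zs)) \<and>
      path_image (gpath p g (y#zs)) = (\<Union>m < length (y#zs) - 1. path_image (g ((y#zs)!m) ((y#zs)!Suc m)))"
    proof -
      have w1: "wpath E (y#zs)" "2 \<le> length (y#zs)" using 3 False by (auto simp: Suc_le_eq)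
      show ?thesis using 3(2)[OF w1] by simp
    qed
    have exy: "E x y" using 3 by simp
    have img: "path_image (g x y +++ gpath p g (y#zs)) = path_image (g x y) \<union> path_image (gpath p g (y#zs))"
      using IH edge_arc[OF exy] by (simp add: path_image_join)
    have U: "(\<Union>m < length (x#y#zs) - 1. path_image (g ((x#y#zs)!m) ((x#y#zs)!Suc m))) =
      path_image (g x y) \<union> (\<Union>m < length (y#zs) - 1. path_image (g ((y#zs)!m) ((y#zs)!Suc m)))"
      by (simp add: lessThan_Suc_eq_insert_0 del: lessThan_Suc)
    show ?thesis using 3 False IH edge_arc[OF exy] img U by simp
  qed
qed auto

lemma wpath_V: "wpath E xs \<Longrightarrow> length xs \<ge> 2 \<Longrightarrow> set xs \<subseteq> V"
proof (induction xs rule: induct_list012)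
  case (3 x y zs)
  then show ?case by (cases zs) (auto dest: E_V)
qed auto

lemma gp_draw: "wpath E xs \<Longrightarrow> length xs \<ge> 2 \<Longrightarrow> path_image (gpath p g xs) \<subseteq> drawing_set V E p g"
proof -
  assume a: "wpath E xs" "length xs \<ge> 2"
  show ?thesis unfolding gp_basic[OF a, THEN conjunct2, THEN conjunct2]
  proof (rule UN_least)
    fix m assume "m \<in> {..<length xs - 1}"
    then have "E (xs!m) (xs!Suc m)" using a unfolding wpath_nth by auto
    then show "path_image (g (xs!m) (xs!Suc m)) \<subseteq> drawing_set V E p g" by (rule edge_draw)
  qed
qed

lemma gp_vtx:
  assumes "wpath E xs" "length xs \<ge> 2" "w \<in> V"
  shows "p w \<in> path_image (gpath p g xs) \<longleftrightarrow> w \<in> set xs"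
proof
  assume "p w \<in> path_image (gpath p g xs)"
  then obtain m where m: "m < length xs - 1" "p w \<in> path_image (g (xs!m) (xs!Suc m))"
    using gp_basic[OF assms(1,2)] by auto
  have "E (xs!m) (xs!Suc m)" using m assms(1) unfolding wpath_nth by auto
  then have "w = xs!m \<or> w = xs!Suc m" using edge_vtx assms m by blast
  then show "w \<in> set xs" using m by auto
next
  assume "w \<in> set xs"
  then obtain i where i: "i < length xs" "xs!i = w" by (auto simp: in_set_conv_nth)
  show "p w \<in> path_image (gpath p g xs)"
  proof (cases "Suc i < length xs")
    case True
    then have "p w \<in> path_image (g (xs!i) (xs!Suc i))" using edge_ends assms(1) i unfolding wpath_nth by blast
    then show ?thesis using gp_basic[OF assms(1,2)] True by auto
  next
    case False
    then have "i = Suc (length xs - 2)" using i assms(2) by linarith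
    then have "p w \<in> path_image (g (xs!(length xs - 2)) (xs!Suc (length xs - 2)))"
      using edge_ends assms(1,2) i unfolding wpath_nth
      by (metis Suc_diff_Suc Suc_le_lessD diff_less nat_1_add_1 plus_1_eq_Suc zero_less_Suc numeral_2_eq_2)
    then show ?thesis using gp_basic[OF assms(1,2)] assms(2)
      by (auto intro!: bexI[of _ "length xs - 2"])
  qed
qed

lemma gp_edge_int:
  assumes "wpath E xs" "length xs \<ge> 2" "E u v"
    and ne: "\<forall>m. Suc m < length xs \<longrightarrow> {u,v} \<noteq> {xs!m, xs!Suc m}"
  shows "path_image (g u v) \<inter> path_image (gpath p g xs) \<subseteq> p ` ({u,v} \<inter> set xs)"
proof
  fix z assume z: "z \<in> path_image (g u v) \<inter> path_image (gpath p g xs)"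
  then obtain m where m: "m < length xs - 1" "z \<in> path_image (g (xs!m) (xs!Suc m))"
    using gp_basic[OF assms(1,2)] by auto
  have sm: "Suc m < length xs" using m by linarith
  have "E (xs!m) (xs!Suc m)" using assms(1) sm unfolding wpath_nth by blast
  then have "z \<in> p ` ({u,v} \<inter> {xs!m, xs!Suc m})" using edge_int[OF assms(3)] ne sm z m by blast
  then show "z \<in> p ` ({u,v} \<inter> set xs)" using sm by auto
qed

lemma gp_int:
  assumes "wpath E xs" "length xs \<ge> 2" "wpath E ys" "length ys \<ge> 2"
    and ne: "\<forall>m m'. Suc m < length xs \<longrightarrow> Suc m' < length ys \<longrightarrow> {xs!m, xs!Suc m} \<noteq> {ys!m', ys!Suc m'}"
  shows "path_image (gpath p g xs) \<inter> path_image (gpath p g ys) \<subseteq> p ` (set xs \<inter> set ys)"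
proof
  fix z assume z: "z \<in> path_image (gpath p g xs) \<inter> path_image (gpath p g ys)"
  then obtain m where m: "m < length xs - 1" "z \<in> path_image (g (xs!m) (xs!Suc m))"
    using gp_basic[OF assms(1,2)] by auto
  have sm: "Suc m < length xs" using m by linarith
  have "E (xs!m) (xs!Suc m)" using assms(1) sm unfolding wpath_nth by blast
  then have "z \<in> p ` ({xs!m, xs!Suc m} \<inter> set ys)"
    using gp_edge_int[OF assms(3,4)] ne sm z m by blast
  then show "z \<in> p ` (set xs \<inter> set ys)" using sm by auto
qed

lemma gp_arc: "wpath E xs \<Longrightarrow> length xs \<ge> 2 \<Longrightarrow> distinct xs \<Longrightarrow> arc (gpath p g xs)"
proof (induction xs rule: induct_list012)
  case (3 x y zs)
  show ?case
  proof (cases "zs = []")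
    case True
    then show ?thesis using 3 edge_arc[of x y] by simp
  next
    case False
    have exy: "E x y" using 3 by simp
    have w: "wpath E (y#zs)" "length (y#zs) \<ge> 2" using 3 False by (auto simp: Suc_le_eq)
    have IH: "arc (gpath p g (y#zs))" using 3(2)[OF w] 3 by simp
    have st: "pathstart (gpath p g (y#zs)) = p y" using gp_basic[OF w] by simp
    have "path_image (g x y) \<inter> path_image (gpath p g (y#zs)) \<subseteq> p ` ({x,y} \<inter> set (y#zs))"
    proof (rule gp_edge_int[OF w exy], intro allI impI)
      fix m assume "Suc m < length (y#zs)"
      then have "(y#zs)!m \<in> set (y#zs)" "(y#zs)!Suc m \<in> set (y#zs)" using nth_mem Suc_lessD by blast+
      moreover have "x \<notin> set (y#zs)" using 3 by simp
      ultimately show "{x, y} \<noteq> {(y # zs) ! m, (y # zs) ! Suc m}"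
      proof (intro notI)
        assume a1: "(y#zs)!m \<in> set (y#zs)" "(y#zs)!Suc m \<in> set (y#zs)" "x \<notin> set (y#zs)"
          and eq: "{x, y} = {(y # zs) ! m, (y # zs) ! Suc m}"
        have "x \<in> {(y # zs) ! m, (y # zs) ! Suc m}" using eq by blast
        then show False using a1 by blast
      qed
    qed
    also have "\<dots> = {p y}" using 3 by auto
    finally have "path_image (g x y) \<inter> path_image (gpath p g (y#zs)) \<subseteq> {pathstart (gpath p g (y#zs))}"
      using st by simp
    then show ?thesis using False arc_join[OF _ IH] edge_arc[OF exy] st by simp
  qed
qed auto

end



lemma arc_conn_start:
  fixes c :: "real \<Rightarrow> 'b::real_normed_vector"
  assumes "arc c" shows "connected (path_image c - {pathstart c})"
proof -
  have inj: "inj_on c {0..1}" using arc_imp_inj_on[OF assms] .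
  have "c ` {0<..1} = path_image c - {pathstart c}"
  proof
    show "c ` {0<..1} \<subseteq> path_image c - {pathstart c}"
    proof
      fix z assume "z \<in> c ` {0<..1}"
      then obtain t where t: "t \<in> {0<..1}" "z = c t" by blast
      have "c t \<noteq> c 0" using inj t unfolding inj_on_def by force
      then show "z \<in> path_image c - {pathstart c}" using t unfolding path_image_def pathstart_def by auto
    qed
    show "path_image c - {pathstart c} \<subseteq> c ` {0<..1}"
      unfolding path_image_def pathstart_def by (force simp: image_iff)
  qed
  moreover have "connected (c ` {0<..1})"
  proof (rule connected_continuous_image)
    show "continuous_on {0<..1} c"
      using arc_imp_path[OF assms] unfolding path_def by (rule continuous_on_subset) auto
  qed (simp add: is_interval_connected)
  ultimately show ?thesis by simp
qed

lemma nce: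
  assumes "distinct xs" "length xs \<ge> 3" "set xs \<inter> S \<subseteq> {hd xs, last xs}"
    "u \<in> S" "v \<in> S" "Suc m < length xs" "{u,v} = {xs!m, xs!Suc m}"
  shows False
proof -
  have ne: "xs \<noteq> []" using assms(2) by auto
  have h: "hd xs = xs!0" "last xs = xs!(length xs - 1)" using ne by (auto simp: hd_conv_nth last_conv_nth)
  have "xs!m \<in> {u,v}" "xs!Suc m \<in> {u,v}" unfolding assms(7) by simp_all
  then have S: "xs!m \<in> S" "xs!Suc m \<in> S" using assms(4,5) by auto
  have m1: "m < length xs" "Suc m < length xs" "0 < length xs" "length xs - 1 < length xs" using assms(6) by auto
  have "xs!m \<in> set xs" "xs!Suc m \<in> set xs" using m1 by simp_all
  then have A: "xs!m \<in> {xs!0, xs!(length xs - 1)}" and B: "xs!Suc m \<in> {xs!0, xs!(length xs - 1)}"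
  proof -
    have "set xs \<inter> S \<subseteq> {xs!0, xs!(length xs - 1)}" using assms(3) unfolding h .
    then show "xs!m \<in> {xs!0, xs!(length xs - 1)}" "xs!Suc m \<in> {xs!0, xs!(length xs - 1)}"
      using \<open>xs!m \<in> set xs\<close> \<open>xs!Suc m \<in> set xs\<close> S by blast+
  qed
  have e: "\<And>i j. i < length xs \<Longrightarrow> j < length xs \<Longrightarrow> xs!i = xs!j \<Longrightarrow> i = j"
    using nth_eq_iff_index_eq[OF assms(1)] by blast
  have "m = 0 \<or> m = length xs - 1"
  proof -
    from A have "xs!m = xs!0 \<or> xs!m = xs!(length xs - 1)" by simp
    then show ?thesis using e[of m 0] e[of m "length xs - 1"] m1 by blast
  qed
  moreover have "Suc m = 0 \<or> Suc m = length xs - 1"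
  proof -
    from B have "xs!Suc m = xs!0 \<or> xs!Suc m = xs!(length xs - 1)" by simp
    then show ?thesis using e[of "Suc m" 0] e[of "Suc m" "length xs - 1"] m1 by blast
  qed
  ultimately show False using assms(2,6) by linarith
qed

definition cpath :: "'a list \<Rightarrow> nat \<Rightarrow> nat \<Rightarrow> 'a list" where
  "cpath cs i L = map (\<lambda>t. cs ! ((i+t) mod length cs)) [0..<Suc L]"

lemma cpath_len[simp]: "length (cpath cs i L) = Suc L"
  by (simp add: cpath_def)

lemma cpath_nth: "t \<le> L \<Longrightarrow> cpath cs i L ! t = cs ! ((i+t) mod length cs)"
  unfolding cpath_def by (simp del: upt_Suc add: nth_map_upt less_Suc_eq_le)

lemma cpath_hd: "hd (cpath cs i L) = cs ! (i mod length cs)"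
  by (simp add: cpath_def upt_conv_Cons del: upt_Suc)

lemma cpath_last: "last (cpath cs i L) = cs ! ((i + L) mod length cs)"
  by (simp add: cpath_def)

lemma cpath_set: "x \<in> set (cpath cs i L) \<longleftrightarrow> (\<exists>t\<le>L. x = cs ! ((i+t) mod length cs))"
  unfolding cpath_def by (auto simp: image_iff less_Suc_eq_le simp del: upt_Suc)

lemma mod_inj_aux1:
  fixes n i t t' :: nat
  assumes "(i+t) mod n = (i+t') mod n" "t < n" "t' < n" "t \<le> t'"
  shows "t = t'"
proof -
  have "n dvd (i+t') - (i+t)" using mod_eq_dvd_iff_nat[of "i+t" "i+t'" n] assms by simp
  then have "n dvd t' - t" by simp
  moreover have "t' - t < n" using assms by simp
  ultimately have "t' - t = 0" using dvd_imp_le[of n "t' - t"] by linarith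
  then show ?thesis using assms by simp
qed

lemma mod_inj_aux:
  fixes n i t t' :: nat
  assumes "(i+t) mod n = (i+t') mod n" "t < n" "t' < n"
  shows "t = t'"
proof (cases "t \<le> t'")
  case True show ?thesis by (rule mod_inj_aux1[OF assms True])
next
  case False then show ?thesis using mod_inj_aux1[of i t' n t] assms by linarith
qed

lemma cpath_distinct: "distinct cs \<Longrightarrow> L < length cs \<Longrightarrow> distinct (cpath cs i L)"
  unfolding cpath_def distinct_map
proof
  assume a: "distinct cs" "L < length cs"
  then have ne: "length cs > 0" by auto
  show "inj_on (\<lambda>t. cs ! ((i + t) mod length cs)) (set [0..<Suc L])"
  proof (rule inj_onI)
    fix t t' assume tt: "t \<in> set [0..<Suc L]" "t' \<in> set [0..<Suc L]"
      "cs ! ((i + t) mod length cs) = cs ! ((i + t') mod length cs)"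
    moreover have "(i + t) mod length cs < length cs" "(i + t') mod length cs < length cs"
      using ne by simp_all
    ultimately have "(i + t) mod length cs = (i + t') mod length cs"
      using nth_eq_iff_index_eq[OF a(1)] by simp
    moreover have "t < length cs" "t' < length cs" using tt a by auto
    ultimately show "t = t'" using mod_inj_aux by blast
  qed
qed simp

lemma cycle_edge: "is_cycle V E cs \<Longrightarrow> m < length cs \<Longrightarrow> E (cs!m) (cs!((m+1) mod length cs))"
  unfolding is_cycle_def by blast

lemma cpath_wpath:
  assumes "is_cycle V E cs"
  shows "wpath E (cpath cs i L)"
  unfolding wpath_nth
proof (intro allI impI)
  fix t assume t: "Suc t < length (cpath cs i L)"
  have n: "length cs > 0" using assms unfolding is_cycle_def by auto
  have "E (cs!((i+t) mod length cs)) (cs!(((i+t) mod length cs + 1) mod length cs))"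
    using cycle_edge[OF assms] n by simp
  moreover have "((i+t) mod length cs + 1) mod length cs = (i + Suc t) mod length cs"
    by (simp add: mod_Suc_eq)
  ultimately show "E (cpath cs i L ! t) (cpath cs i L ! Suc t)"
    using t by (simp add: cpath_nth)
qed

lemma mod_wrap:
  fixes j t n :: nat
  assumes "j < n" "t \<le> n"
  shows "(j + t) mod n = (if j + t < n then j + t else j + t - n)"
proof (cases "j + t < n")
  case False
  then have "(j+t) mod n = (j + t - n) mod n" by (simp add: le_mod_geq)
  also have "\<dots> = j + t - n" using assms by simp
  finally show ?thesis using False by simp
qed simp

context odraw
begin

definition cimg :: "'a list \<Rightarrow> complex set" where
  "cimg cs = (\<Union>m < length cs. path_image (g (cs!m) (cs!((m+1) mod length cs))))"

lemma img_int:
  assumes "wpath E xs" "distinct xs" "length xs \<ge> 3" "wpath E ys" "length ys \<ge> 2"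
    "set xs \<inter> set ys = {hd xs, last xs}"
  shows "path_image (gpath p g xs) \<inter> path_image (gpath p g ys) = {p (hd xs), p (last xs)}"
proof
  have x2: "length xs \<ge> 2" using assms by simp
  have "path_image (gpath p g xs) \<inter> path_image (gpath p g ys) \<subseteq> p ` (set xs \<inter> set ys)"
  proof (rule gp_int[OF assms(1) x2 assms(4,5)], intro allI impI notI)
    fix m m' assume "Suc m < length xs" "Suc m' < length ys" "{xs ! m, xs ! Suc m} = {ys ! m', ys ! Suc m'}"
    then show False using nce[OF assms(2,3), of "set ys" "ys!m'" "ys!Suc m'" m] assms(6) by auto
  qed
  then show "path_image (gpath p g xs) \<inter> path_image (gpath p g ys) \<subseteq> {p (hd xs), p (last xs)}"
    using assms(6) by simp
  have xne: "xs \<noteq> []" using assms by auto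
  have V: "set xs \<subseteq> V" using wpath_V[OF assms(1) x2] .
  have "hd xs \<in> set xs" "last xs \<in> set xs" using xne by auto
  then have "hd xs \<in> set ys" "last xs \<in> set ys" "hd xs \<in> V" "last xs \<in> V" using assms(6) V by blast+
  then show "{p (hd xs), p (last xs)} \<subseteq> path_image (gpath p g xs) \<inter> path_image (gpath p g ys)"
    using gp_vtx[OF assms(1) x2] gp_vtx[OF assms(4,5)] xne by auto
qed

lemma internal_not_inside:
  assumes "wpath E xs" "distinct xs" "length xs \<ge> 3" "closed K" "K \<subseteq> drawing_set V E p g"
  shows "\<not> (path_image (gpath p g xs) - {p (hd xs), p (last xs)} \<subseteq> inside K)"
proof
  assume a: "path_image (gpath p g xs) - {p (hd xs), p (last xs)} \<subseteq> inside K"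
  have x2: "length xs \<ge> 2" using assms by simp
  have xne: "xs \<noteq> []" using assms by auto
  have V: "set xs \<subseteq> V" using wpath_V[OF assms(1) x2] .
  let ?w = "xs!1"
  have w: "?w \<in> set xs" using assms(3) by simp
  have wV: "?w \<in> V" using w V by blast
  have "hd xs = xs!0" "last xs = xs!(length xs - 1)" using xne by (auto simp: hd_conv_nth last_conv_nth)
  moreover have l: "1 < length xs" "0 < length xs" "length xs - 1 < length xs" "(1::nat) \<noteq> length xs - 1"
    using assms(3) by auto
  moreover have "?w \<noteq> xs!0" using nth_eq_iff_index_eq[OF assms(2) l(1) l(2)] by simp
  moreover have "?w \<noteq> xs!(length xs - 1)" using nth_eq_iff_index_eq[OF assms(2) l(1) l(3)] l(4) by simp
  ultimately have "?w \<noteq> hd xs" "?w \<noteq> last xs" by metis+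
  moreover have "hd xs \<in> V" "last xs \<in> V" using V hd_in_set[OF xne] last_in_set[OF xne] by auto
  ultimately have "p ?w \<noteq> p (hd xs)" "p ?w \<noteq> p (last xs)" using p_inj wV by metis+
  moreover have "p ?w \<in> path_image (gpath p g xs)" using gp_vtx[OF assms(1) x2 wV] w by blast
  ultimately have "p ?w \<in> inside K" using a by blast
  then show False using outer_not_inside[OF wV assms(4,5)] by blast
qed

lemma gp_closed: "wpath E xs \<Longrightarrow> length xs \<ge> 2 \<Longrightarrow> distinct xs \<Longrightarrow> closed (path_image (gpath p g xs))"
  using gp_arc closed_arc_image by blast

lemma theta_graph:
  assumes "a \<noteq> b"
    and x: "wpath E xs" "distinct xs" "length xs \<ge> 3" "hd xs = a" "last xs = b"
    and y: "wpath E ys" "distinct ys" "length ys \<ge> 3" "hd ys = a" "last ys = b"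
    and z: "wpath E zs" "distinct zs" "length zs \<ge> 3" "hd zs = a" "last zs = b"
    and xy: "set xs \<inter> set ys = {a,b}" and xz: "set xs \<inter> set zs = {a,b}" and yz: "set ys \<inter> set zs = {a,b}"
  shows False
proof -
  have x2: "length xs \<ge> 2" and y2: "length ys \<ge> 2" and z2: "length zs \<ge> 2" using x y z by auto
  have xne: "xs \<noteq> []" using x(3) by auto
  have aV: "a \<in> V" "b \<in> V" using wpath_V[OF x(1) x2] x(4,5) hd_in_set[OF xne] last_in_set[OF xne] by auto
  have ab: "p a \<noteq> p b" using p_inj aV assms(1) by blast
  note gx = gp_basic[OF x(1) x2] and gy = gp_basic[OF y(1) y2] and gz = gp_basic[OF z(1) z2]
  have ixy: "path_image (gpath p g xs) \<inter> path_image (gpath p g ys) = {p a, p b}"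
    using img_int[OF x(1-3) y(1) y2] xy x by simp
  have ixz: "path_image (gpath p g xs) \<inter> path_image (gpath p g zs) = {p a, p b}"
    using img_int[OF x(1-3) z(1) z2] xz x by simp
  have iyz: "path_image (gpath p g ys) \<inter> path_image (gpath p g zs) = {p a, p b}"
    using img_int[OF y(1-3) z(1) z2] yz y by simp
  have K: "closed (path_image (gpath p g xs) \<union> path_image (gpath p g ys))"
    "closed (path_image (gpath p g ys) \<union> path_image (gpath p g zs))"
    "closed (path_image (gpath p g xs) \<union> path_image (gpath p g zs))"
    using gp_closed x y z x2 y2 z2 by auto
  have D: "path_image (gpath p g xs) \<union> path_image (gpath p g ys) \<subseteq> drawing_set V E p g"
    "path_image (gpath p g ys) \<union> path_image (gpath p g zs) \<subseteq> drawing_set V E p g"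
    "path_image (gpath p g xs) \<union> path_image (gpath p g zs) \<subseteq> drawing_set V E p g"
    using gp_draw x y z x2 y2 z2 by auto
  from theta_inside[OF gp_arc[OF x(1) x2 x(2)] gp_arc[OF y(1) y2 y(2)] gp_arc[OF z(1) z2 z(2)]
      _ _ _ _ _ _ ab ixy ixz iyz]
  show False
    using gx gy gz x y z internal_not_inside[OF z(1-3) K(1) D(1)] internal_not_inside[OF x(1-3) K(2) D(2)]
      internal_not_inside[OF y(1-3) K(3) D(3)] by auto
qed

lemma edge_in:
  assumes "E u v" "closed K" "K \<subseteq> drawing_set V E p g"
    and dis: "(path_image (g u v) - {p u}) \<inter> K = {}"
    and ins: "(path_image (g u v) - {p u, p v}) \<inter> inside K \<noteq> {}"
  shows False
proof -
  let ?S = "path_image (g u v) - {p u}"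
  have arc: "arc (g u v)" "pathstart (g u v) = p u" "pathfinish (g u v) = p v" using edge_arc[OF assms(1)] by auto
  have conn: "connected ?S" using arc_conn_start[OF arc(1)] arc by simp
  obtain x where x: "x \<in> ?S" "x \<in> inside K" using ins by blast
  have sub: "?S \<subseteq> connected_component_set (- K) x"
    by (rule connected_component_maximal[OF x(1) conn]) (use dis in blast)
  have uv: "u \<noteq> v" using E_irr[OF assms(1)] .
  have vV: "v \<in> V" using E_V[OF assms(1)] by blast
  have "p u \<noteq> p v" using p_inj E_V[OF assms(1)] uv by blast
  then have "p v \<in> ?S" using edge_ends[OF assms(1)] by auto
  then have "p v \<in> connected_component_set (- K) x" using sub by blast
  then have "connected_component_set (- K) (p v) = connected_component_set (- K) x"
    by (metis connected_component_eq mem_Collect_eq)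
  moreover have "p v \<notin> K" using \<open>p v \<in> ?S\<close> dis by blast
  ultimately have "p v \<in> inside K" using x(2) unfolding inside_def by simp
  then show False using outer_not_inside[OF vV assms(2,3)] by blast
qed

end



lemma bex_le_cong: "(\<And>t. t \<le> k \<Longrightarrow> P t = Q t) \<Longrightarrow> (\<exists>t\<le>k. P t) = (\<exists>t\<le>(k::nat). Q t)"
  by auto

lemma cpath_set1:
  assumes "distinct cs" "i \<le> j" "j < length cs" "m < length cs"
  shows "cs!m \<in> set (cpath cs i (j-i)) \<longleftrightarrow> i \<le> m \<and> m \<le> j"
proof -
  have "cs!m \<in> set (cpath cs i (j-i)) \<longleftrightarrow> (\<exists>t\<le>j-i. cs!m = cs!((i+t) mod length cs))"
    by (rule cpath_set)
  also have "\<dots> \<longleftrightarrow> (\<exists>t\<le>j-i. m = i+t)"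
  proof (rule bex_le_cong)
    fix t assume t: "t \<le> j - i"
    have "(i+t) mod length cs = i + t" using assms t by simp
    moreover have "i + t < length cs" using assms t by simp
    ultimately show "(cs!m = cs!((i+t) mod length cs)) = (m = i+t)"
      using nth_eq_iff_index_eq[OF assms(1) assms(4), of "i+t"] by simp
  qed
  also have "\<dots> \<longleftrightarrow> i \<le> m \<and> m \<le> j"
  proof
    assume "\<exists>t\<le>j-i. m = i+t" then show "i \<le> m \<and> m \<le> j" using assms by auto
  next
    assume "i \<le> m \<and> m \<le> j" then show "\<exists>t\<le>j-i. m = i+t" by (intro exI[of _ "m-i"]) auto
  qed
  finally show ?thesis .
qed

lemma cpath_set2:
  assumes "distinct cs" "i < j" "j < length cs" "m < length cs"
  shows "cs!m \<in> set (cpath cs j (length cs - (j-i))) \<longleftrightarrow> m \<le> i \<or> j \<le> m"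
proof -
  let ?n = "length cs"
  have "cs!m \<in> set (cpath cs j (?n - (j-i))) \<longleftrightarrow> (\<exists>t\<le>?n-(j-i). cs!m = cs!((j+t) mod ?n))"
    by (rule cpath_set)
  also have "\<dots> \<longleftrightarrow> (\<exists>t\<le>?n-(j-i). m = (j+t) mod ?n)"
  proof -
    have "?n > 0" using assms by linarith
    then have "\<And>t. (j+t) mod ?n < ?n" by simp
    then have "\<And>t. cs!m = cs!((j+t) mod ?n) \<longleftrightarrow> m = (j+t) mod ?n"
      using nth_eq_iff_index_eq[OF assms(1) assms(4)] by blast
    then show ?thesis by simp
  qed
  also have "\<dots> \<longleftrightarrow> m \<le> i \<or> j \<le> m"
  proof
    assume "\<exists>t\<le>?n-(j-i). m = (j+t) mod ?n"
    then obtain t where t: "t \<le> ?n-(j-i)" "m = (j+t) mod ?n" by blast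
    have "t \<le> ?n" using t by simp
    then have "m = (if j + t < ?n then j + t else j + t - ?n)" using mod_wrap[OF assms(3)] t by simp
    then show "m \<le> i \<or> j \<le> m" using t assms by (auto split: if_splits)
  next
    assume h: "m \<le> i \<or> j \<le> m"
    show "\<exists>t\<le>?n-(j-i). m = (j+t) mod ?n"
    proof (cases "j \<le> m")
      case True
      then show ?thesis using assms by (intro exI[of _ "m-j"]) auto
    next
      case False
      then have mi: "m \<le> i" using h by simp
      have "(j + (m + ?n - j)) mod ?n = m" using assms False by simp
      moreover have "m + ?n - j \<le> ?n - (j-i)" using mi assms by simp
      ultimately show ?thesis by (intro exI[of _ "m + ?n - j"]) auto
    qed
  qed
  finally show ?thesis .
qed

lemma idx_union:
  fixes i j n :: nat
  assumes "i < j" "j < n"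
  shows "(\<lambda>t. (i+t) mod n) ` {..<j-i} \<union> (\<lambda>t. (j+t) mod n) ` {..<n-(j-i)} = {..<n}"
proof
  show "(\<lambda>t. (i+t) mod n) ` {..<j-i} \<union> (\<lambda>t. (j+t) mod n) ` {..<n-(j-i)} \<subseteq> {..<n}"
    using assms by auto
  show "{..<n} \<subseteq> (\<lambda>t. (i+t) mod n) ` {..<j-i} \<union> (\<lambda>t. (j+t) mod n) ` {..<n-(j-i)}"
  proof
    fix m assume m: "m \<in> {..<n}"
    show "m \<in> (\<lambda>t. (i+t) mod n) ` {..<j-i} \<union> (\<lambda>t. (j+t) mod n) ` {..<n-(j-i)}"
    proof (cases "i \<le> m \<and> m < j")
      case True
      then have "m = (i + (m-i)) mod n" "m - i \<in> {..<j-i}" using m by auto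
      then show ?thesis by blast
    next
      case False
      show ?thesis
      proof (cases "j \<le> m")
        case True
        then have "m = (j + (m-j)) mod n" "m - j \<in> {..<n-(j-i)}" using m assms by auto
        then show ?thesis by blast
      next
        case False
        then have mi: "m < i" using \<open>\<not> (i \<le> m \<and> m < j)\<close> by auto
        have "(j + (m + n - j)) mod n = m" using assms m by simp
        moreover have "m + n - j \<in> {..<n-(j-i)}" using mi assms by auto
        ultimately show ?thesis by (metis UnI2 image_eqI)
      qed
    qed
  qed
qed

context odraw
begin

definition ed :: "'a list \<Rightarrow> nat \<Rightarrow> complex set" where
  "ed cs m = path_image (g (cs!m) (cs!((m+1) mod length cs)))"

lemma cimg_ed: "cimg cs = (\<Union>m<length cs. ed cs m)"
  unfolding cimg_def ed_def by simp

lemma img_cpath: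
  assumes "is_cycle V E cs" "L \<ge> 1"
  shows "path_image (gpath p g (cpath cs i L)) = (\<Union>t<L. ed cs ((i+t) mod length cs))"
proof -
  have w: "wpath E (cpath cs i L)" "length (cpath cs i L) \<ge> 2" using cpath_wpath[OF assms(1)] assms(2) by auto
  have n: "length cs > 0" using assms(1) unfolding is_cycle_def by auto
  have "path_image (gpath p g (cpath cs i L)) =
     (\<Union>t<L. path_image (g (cpath cs i L ! t) (cpath cs i L ! Suc t)))"
    using gp_basic[OF w] by simp
  also have "\<dots> = (\<Union>t<L. ed cs ((i+t) mod length cs))"
  proof (rule SUP_cong)
    fix t assume t: "t \<in> {..<L}"
    have "((i+t) mod length cs + 1) mod length cs = (i + Suc t) mod length cs"
      by (simp add: mod_Suc_eq)
    then show "path_image (g (cpath cs i L ! t) (cpath cs i L ! Suc t)) = ed cs ((i+t) mod length cs)"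
      using t unfolding ed_def by (simp add: cpath_nth)
  qed simp
  finally show ?thesis .
qed

lemma cycle_theta:
  assumes cyc: "is_cycle V E cs" and ij: "i < j" "j < length cs" "2 \<le> j - i" "2 \<le> length cs - (j - i)"
  defines "P1 \<equiv> cpath cs i (j-i)" and "P2 \<equiv> cpath cs j (length cs - (j-i))"
  shows "wpath E P1" "distinct P1" "length P1 \<ge> 3" "hd P1 = cs!i" "last P1 = cs!j"
    "wpath E P2" "distinct P2" "length P2 \<ge> 3" "hd P2 = cs!j" "last P2 = cs!i"
    "\<And>m. m < length cs \<Longrightarrow> cs!m \<in> set P1 \<longleftrightarrow> i \<le> m \<and> m \<le> j"
    "\<And>m. m < length cs \<Longrightarrow> cs!m \<in> set P2 \<longleftrightarrow> m \<le> i \<or> j \<le> m"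
    "set P1 \<inter> set P2 = {cs!i, cs!j}"
    "path_image (gpath p g P1) \<union> path_image (gpath p g P2) = cimg cs"
proof -
  let ?n = "length cs"
  have dcs: "distinct cs" using cyc unfolding is_cycle_def by blast
  show "wpath E P1" "wpath E P2" unfolding P1_def P2_def using cpath_wpath[OF cyc] by auto
  show "distinct P1" "distinct P2" unfolding P1_def P2_def using cpath_distinct[OF dcs] ij by auto
  show "length P1 \<ge> 3" "length P2 \<ge> 3" unfolding P1_def P2_def using ij by auto
  show "hd P1 = cs!i" "last P1 = cs!j" unfolding P1_def using ij by (auto simp: cpath_hd cpath_last)
  have "(j + (?n - (j-i))) mod ?n = i"
  proof -
    have "j + (?n - (j-i)) = i + ?n" using ij by simp
    then show ?thesis using ij by simp
  qed
  then show "hd P2 = cs!j" "last P2 = cs!i" unfolding P2_def using ij by (auto simp: cpath_hd cpath_last)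
  show s1: "\<And>m. m < length cs \<Longrightarrow> cs!m \<in> set P1 \<longleftrightarrow> i \<le> m \<and> m \<le> j"
    unfolding P1_def using cpath_set1[OF dcs] ij by simp
  show s2: "\<And>m. m < length cs \<Longrightarrow> cs!m \<in> set P2 \<longleftrightarrow> m \<le> i \<or> j \<le> m"
    unfolding P2_def using cpath_set2[OF dcs] ij by simp
  have n0: "?n > 0" using ij by linarith
  have sub: "set P1 \<subseteq> set cs" "set P2 \<subseteq> set cs" unfolding P1_def P2_def cpath_def
    using n0 by (auto intro!: nth_mem)
  show "set P1 \<inter> set P2 = {cs!i, cs!j}"
  proof
    show "set P1 \<inter> set P2 \<subseteq> {cs!i, cs!j}"
    proof
      fix x assume x: "x \<in> set P1 \<inter> set P2"
      then have "x \<in> set cs" using sub by blast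
      then obtain m where m: "m < ?n" "x = cs!m" by (metis in_set_conv_nth)
      then have "i \<le> m \<and> m \<le> j" "m \<le> i \<or> j \<le> m" using s1 s2 x by auto
      then have "m = i \<or> m = j" by auto
      then show "x \<in> {cs!i, cs!j}" using m by auto
    qed
    show "{cs!i, cs!j} \<subseteq> set P1 \<inter> set P2" using s1[of i] s1[of j] s2[of i] s2[of j] ij by auto
  qed
  have "path_image (gpath p g P1) \<union> path_image (gpath p g P2) =
      (\<Union>t<j-i. ed cs ((i+t) mod ?n)) \<union> (\<Union>t<?n-(j-i). ed cs ((j+t) mod ?n))"
    unfolding P1_def P2_def using img_cpath[OF cyc] ij by simp
  also have "\<dots> = (\<Union>m \<in> (\<lambda>t. (i+t) mod ?n) ` {..<j-i} \<union> (\<lambda>t. (j+t) mod ?n) ` {..<?n-(j-i)}. ed cs m)"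
    by auto
  also have "\<dots> = cimg cs" unfolding idx_union[OF ij(1,2)] cimg_ed ..
  finally show "path_image (gpath p g P1) \<union> path_image (gpath p g P2) = cimg cs" .
qed

end



context odraw
begin

lemma edge_closed: "E u v \<Longrightarrow> closed (path_image (g u v))"
  using edge_arc closed_arc_image by blast

lemma chord_inside:
  assumes cyc: "is_cycle V E cs" and ij: "i < j" "j < length cs" "2 \<le> j - i" "2 \<le> length cs - (j - i)"
    and ch: "E (cs!i) (cs!j)"
  shows "path_image (g (cs!i) (cs!j)) - {p (cs!i), p (cs!j)} \<subseteq> inside (cimg cs)"
proof -
  define P1 where "P1 = cpath cs i (j-i)"
  define P2 where "P2 = cpath cs j (length cs - (j-i))"
  note ct = cycle_theta[OF cyc ij, folded P1_def P2_def]
  let ?a = "cs!i" and ?b = "cs!j"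
  have dcs: "distinct cs" using cyc unfolding is_cycle_def by blast
  have ab: "?a \<noteq> ?b" using nth_eq_iff_index_eq[OF dcs] ij by auto
  have abV: "?a \<in> V" "?b \<in> V" using E_V[OF ch] by auto
  have pab: "p ?a \<noteq> p ?b" using p_inj abV ab by blast
  have w3: "wpath E [?a, ?b]" "length [?a,?b] \<ge> 2" using ch by auto
  have g3: "gpath p g [?a, ?b] = g ?a ?b" by simp
  have P12: "length P1 \<ge> 2" "length P2 \<ge> 2" using ct by auto
  have arc1: "arc (gpath p g P1)" using gp_arc[OF ct(1) P12(1) ct(2)] .
  have arc2: "arc (reversepath (gpath p g P2))" using gp_arc[OF ct(6) P12(2) ct(7)] arc_reversepath by blast
  have arc3: "arc (g ?a ?b)" using edge_arc[OF ch] by blast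
  have e1: "pathstart (gpath p g P1) = p ?a" "pathfinish (gpath p g P1) = p ?b"
    using gp_basic[OF ct(1) P12(1)] ct by auto
  have e2: "pathstart (reversepath (gpath p g P2)) = p ?a" "pathfinish (reversepath (gpath p g P2)) = p ?b"
    using gp_basic[OF ct(6) P12(2)] ct by auto
  have e3: "pathstart (g ?a ?b) = p ?a" "pathfinish (g ?a ?b) = p ?b" using edge_arc[OF ch] by auto
  have i12: "path_image (gpath p g P1) \<inter> path_image (reversepath (gpath p g P2)) = {p ?a, p ?b}"
    using img_int[OF ct(1,2,3,6) P12(2)] ct by simp
  have sP1: "?a \<in> set P1" "?b \<in> set P1" using ct(11)[of i] ct(11)[of j] ij by auto
  have sP2: "?a \<in> set P2" "?b \<in> set P2" using ct(12)[of i] ct(12)[of j] ij by auto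
  have i13: "path_image (gpath p g P1) \<inter> path_image (g ?a ?b) = {p ?a, p ?b}"
  proof -
    have "set P1 \<inter> set [?a, ?b] = {hd P1, last P1}" using sP1 ct by auto
    then show ?thesis using img_int[OF ct(1,2,3) w3] ct g3 by simp
  qed
  have i23: "path_image (reversepath (gpath p g P2)) \<inter> path_image (g ?a ?b) = {p ?a, p ?b}"
  proof -
    have "set P2 \<inter> set [?a, ?b] = {hd P2, last P2}" using sP2 ct by auto
    then show ?thesis using img_int[OF ct(6,7,8) w3] ct g3 by auto
  qed
  have cl: "closed (path_image (gpath p g P1))" "closed (path_image (gpath p g P2))"
    "closed (path_image (g ?a ?b))"
    using gp_closed ct P12 edge_closed[OF ch] by auto
  have dr: "path_image (gpath p g P1) \<subseteq> drawing_set V E p g" "path_image (gpath p g P2) \<subseteq> drawing_set V E p g"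
    "path_image (g ?a ?b) \<subseteq> drawing_set V E p g"
    using gp_draw ct P12 edge_draw[OF ch] by auto
  have n2: "\<not> (path_image (gpath p g P1) - {p ?a, p ?b} \<subseteq> inside (path_image (gpath p g P2) \<union> path_image (g ?a ?b)))"
    using internal_not_inside[OF ct(1,2,3), of "path_image (gpath p g P2) \<union> path_image (g ?a ?b)"] cl dr ct by auto
  have n3: "\<not> (path_image (gpath p g P2) - {p ?a, p ?b} \<subseteq> inside (path_image (gpath p g P1) \<union> path_image (g ?a ?b)))"
  proof -
    have "{p ?a, p ?b} = {p (hd P2), p (last P2)}" using ct by auto
    then show ?thesis
      using internal_not_inside[OF ct(6,7,8), of "path_image (gpath p g P1) \<union> path_image (g ?a ?b)"] cl dr by auto
  qed
  from theta_inside[OF arc1 arc2 arc3 e1 e2 e3 pab i12 i13 i23]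
  show ?thesis using n2 n3 ct(14) by auto
qed

lemma no_cross:
  assumes cyc: "is_cycle V E cs" and ii: "i1 < i2" "i2 < i3" "i3 < i4" "i4 < length cs"
    and ch1: "E (cs!i1) (cs!i3)" and ch2: "E (cs!i2) (cs!i4)"
  shows False
proof -
  let ?a = "cs!i1" and ?b = "cs!i3" and ?c = "cs!i2" and ?d = "cs!i4"
  have ij: "i1 < i3" "i3 < length cs" "2 \<le> i3 - i1" "2 \<le> length cs - (i3 - i1)" using ii by auto
  have ij2: "i2 < i4" "i4 < length cs" "2 \<le> i4 - i2" "2 \<le> length cs - (i4 - i2)" using ii by auto
  define P1 where "P1 = cpath cs i1 (i3-i1)"
  define P2 where "P2 = cpath cs i3 (length cs - (i3-i1))"
  note ct = cycle_theta[OF cyc ij, folded P1_def P2_def]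
  have dcs: "distinct cs" using cyc unfolding is_cycle_def by blast
  have neq: "?a \<noteq> ?b" "?c \<noteq> ?a" "?c \<noteq> ?b" "?d \<noteq> ?a" "?d \<noteq> ?b" "?c \<noteq> ?d"
    using nth_eq_iff_index_eq[OF dcs] ii by auto
  have abV: "?a \<in> V" "?b \<in> V" using E_V[OF ch1] by auto
  have cdV: "?c \<in> V" "?d \<in> V" using E_V[OF ch2] by auto
  have pab: "p ?a \<noteq> p ?b" using p_inj abV neq by blast
  have w3: "wpath E [?a, ?b]" "length [?a,?b] \<ge> 2" using ch1 by auto
  have g3: "gpath p g [?a, ?b] = g ?a ?b" by simp
  have P12: "length P1 \<ge> 2" "length P2 \<ge> 2" using ct by auto
  let ?T1 = "path_image (gpath p g P1)" and ?T2 = "path_image (gpath p g P2)" and ?Tc = "path_image (g ?a ?b)"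
  have arc1: "arc (gpath p g P1)" using gp_arc[OF ct(1) P12(1) ct(2)] .
  have arc2: "arc (reversepath (gpath p g P2))" using gp_arc[OF ct(6) P12(2) ct(7)] arc_reversepath by blast
  have arc3: "arc (g ?a ?b)" using edge_arc[OF ch1] by blast
  have e1: "pathstart (gpath p g P1) = p ?a" "pathfinish (gpath p g P1) = p ?b"
    using gp_basic[OF ct(1) P12(1)] ct by auto
  have e2: "pathstart (reversepath (gpath p g P2)) = p ?a" "pathfinish (reversepath (gpath p g P2)) = p ?b"
    using gp_basic[OF ct(6) P12(2)] ct by auto
  have e3: "pathstart (g ?a ?b) = p ?a" "pathfinish (g ?a ?b) = p ?b" using edge_arc[OF ch1] by auto
  have i12: "?T1 \<inter> path_image (reversepath (gpath p g P2)) = {p ?a, p ?b}"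
    using img_int[OF ct(1,2,3,6) P12(2)] ct by simp
  have sP1: "?a \<in> set P1" "?b \<in> set P1" using ct(11)[of i1] ct(11)[of i3] ij by auto
  have sP2: "?a \<in> set P2" "?b \<in> set P2" using ct(12)[of i1] ct(12)[of i3] ij by auto
  have i13: "?T1 \<inter> ?Tc = {p ?a, p ?b}"
  proof -
    have "set P1 \<inter> set [?a, ?b] = {hd P1, last P1}" using sP1 ct by auto
    then show ?thesis using img_int[OF ct(1,2,3) w3] ct g3 by simp
  qed
  have i23: "path_image (reversepath (gpath p g P2)) \<inter> ?Tc = {p ?a, p ?b}"
  proof -
    have "set P2 \<inter> set [?a, ?b] = {hd P2, last P2}" using sP2 ct by auto
    then show ?thesis using img_int[OF ct(6,7,8) w3] ct g3 by auto
  qed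
  have cl: "closed ?T1" "closed ?T2" "closed ?Tc"
    using gp_closed ct P12 edge_closed[OF ch1] by auto
  have dr: "?T1 \<subseteq> drawing_set V E p g" "?T2 \<subseteq> drawing_set V E p g" "?Tc \<subseteq> drawing_set V E p g"
    using gp_draw ct P12 edge_draw[OF ch1] by auto
  have ins1: "?Tc - {p ?a, p ?b} \<subseteq> inside (cimg cs)" using chord_inside[OF cyc ij ch1] .
  have ins2: "path_image (g ?c ?d) - {p ?c, p ?d} \<subseteq> inside (cimg cs)" using chord_inside[OF cyc ij2 ch2] .
  have cimg: "cimg cs = ?T1 \<union> ?T2" using ct(14) by simp
  have ne1: "?Tc - {p ?a, p ?b} \<noteq> {}" using nonempty_simple_path_endless[OF arc_imp_simple_path[OF arc3]] e3 by simp
  have ne_12: "?Tc \<inter> inside (?T1 \<union> path_image (reversepath (gpath p g P2))) \<noteq> {}"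
    using ins1 ne1 cimg by auto
  have SP: "inside (?T1 \<union> ?Tc) \<inter> inside (?T2 \<union> ?Tc) = {} \<and>
      inside (?T1 \<union> ?Tc) \<union> inside (?T2 \<union> ?Tc) \<union> (?Tc - {p ?a, p ?b}) = inside (?T1 \<union> ?T2)"
    by (rule split_inside_simple_closed_curve[OF arc_imp_simple_path[OF arc1] e1 arc_imp_simple_path[OF arc2] e2
        arc_imp_simple_path[OF arc3] e3 pab i12 i13 i23 ne_12]) simp
  then have S1: "inside (?T1 \<union> ?Tc) \<inter> inside (?T2 \<union> ?Tc) = {}"
    and S2: "inside (?T1 \<union> ?Tc) \<union> inside (?T2 \<union> ?Tc) \<union> (?Tc - {p ?a, p ?b}) = inside (?T1 \<union> ?T2)"
    by simp_all
  let ?CD = "path_image (g ?c ?d) - {p ?c, p ?d}"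
  have arccd: "arc (g ?c ?d)" "pathstart (g ?c ?d) = p ?c" "pathfinish (g ?c ?d) = p ?d" using edge_arc[OF ch2] by auto
  have cdne: "?CD \<noteq> {}" using nonempty_simple_path_endless[OF arc_imp_simple_path[OF arccd(1)]] arccd by simp
  have cdconn: "connected ?CD" using connected_simple_path_endless[OF arc_imp_simple_path[OF arccd(1)]] arccd by simp
  have neqe: "{?c, ?d} \<noteq> {?a, ?b}" using neq(2,3) by (simp add: doubleton_eq_iff)
  have cdTc: "path_image (g ?c ?d) \<inter> ?Tc = {}"
  proof -
    have "path_image (g ?c ?d) \<inter> ?Tc \<subseteq> p ` ({?c, ?d} \<inter> {?a, ?b})" using edge_int[OF ch2 ch1 neqe] .
    moreover have "{?c, ?d} \<inter> {?a, ?b} = {}" using neq(2-5) by simp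
    ultimately show ?thesis by simp
  qed
  have "?CD \<subseteq> inside (?T1 \<union> ?T2)" using ins2 cimg by simp
  then have "?CD \<subseteq> inside (?T1 \<union> ?Tc) \<union> inside (?T2 \<union> ?Tc) \<union> (?Tc - {p ?a, p ?b})"
    using S2 by simp
  then have "?CD \<subseteq> inside (?T1 \<union> ?Tc) \<union> inside (?T2 \<union> ?Tc)"
    using cdTc by blast
  moreover have "open (inside (?T1 \<union> ?Tc))" "open (inside (?T2 \<union> ?Tc))"
    using open_inside cl by auto
  ultimately have "?CD \<subseteq> inside (?T1 \<union> ?Tc) \<or> ?CD \<subseteq> inside (?T2 \<union> ?Tc)"
    using conn_split[OF cdconn] S1 by blast
  then show False
  proof
    assume h: "?CD \<subseteq> inside (?T1 \<union> ?Tc)"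
    have dn1: "?d \<notin> set P1" using ct(11)[of i4] ii by auto
    have "p ?d \<notin> ?T1" using gp_vtx[OF ct(1) P12(1) cdV(2)] dn1 by blast
    moreover have "p ?d \<notin> ?Tc" using edge_vtx[OF ch1 cdV(2)] neq by blast
    ultimately have "(path_image (g ?c ?d) - {p ?c}) \<inter> (?T1 \<union> ?Tc) = {}"
      using h inside_no_overlap[of "?T1 \<union> ?Tc"] by blast
    moreover have "?CD \<inter> inside (?T1 \<union> ?Tc) \<noteq> {}" using h cdne by blast
    ultimately show False using edge_in[OF ch2, of "?T1 \<union> ?Tc"] cl dr by blast
  next
    assume h: "?CD \<subseteq> inside (?T2 \<union> ?Tc)"
    have ch2': "E ?d ?c" using E_sym[OF ch2] .
    have im: "path_image (g ?d ?c) = path_image (g ?c ?d)" using edge_img_sym[OF ch2] .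
    have cn2: "?c \<notin> set P2" using ct(12)[of i2] ii by auto
    have "p ?c \<notin> ?T2" using gp_vtx[OF ct(6) P12(2) cdV(1)] cn2 by blast
    moreover have "p ?c \<notin> ?Tc" using edge_vtx[OF ch1 cdV(1)] neq by blast
    ultimately have "(path_image (g ?d ?c) - {p ?d}) \<inter> (?T2 \<union> ?Tc) = {}"
      using h inside_no_overlap[of "?T2 \<union> ?Tc"] im by blast
    moreover have "(path_image (g ?d ?c) - {p ?d, p ?c}) \<inter> inside (?T2 \<union> ?Tc) \<noteq> {}"
      using h cdne im by blast
    ultimately show False using edge_in[OF ch2', of "?T2 \<union> ?Tc"] cl dr by blast
  qed
qed

end



definition res :: "('a \<Rightarrow> 'a \<Rightarrow> bool) \<Rightarrow> 'a set \<Rightarrow> 'a \<Rightarrow> 'a \<Rightarrow> bool" where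
  "res E W x y \<longleftrightarrow> E x y \<and> x \<in> W \<and> y \<in> W"

lemma outerplanar_res:
  assumes "outerplanar V E" "W \<subseteq> V"
  shows "outerplanar W (res E W)"
proof -
  have sg: "simple_graph V E" using assms(1) unfolding outerplanar_def by blast
  obtain p g where pd: "plane_drawing V E p g" and ou: "\<forall>v\<in>V. p v \<in> closure (outside (drawing_set V E p g))"
    using assms(1) unfolding outerplanar_def by blast
  have sg': "simple_graph W (res E W)"
    unfolding simple_graph_def
  proof (intro conjI)
    show "finite W" using sg assms(2) finite_subset unfolding simple_graph_def by blast
    show "\<forall>u v. res E W u v \<longrightarrow> u \<in> W \<and> v \<in> W" unfolding res_def by simp
    show "\<forall>u v. res E W u v \<longrightarrow> res E W v u" using sg unfolding res_def simple_graph_def by simp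
    show "\<forall>v. \<not> res E W v v" using sg unfolding res_def simple_graph_def by simp
  qed
  note pdu = pd[unfolded plane_drawing_def]
  have pd1: "inj_on p V" using conjunct1[OF pdu] .
  have pd2: "\<forall>u v. E u v \<longrightarrow> arc (g u v) \<and> pathstart (g u v) = p u \<and> pathfinish (g u v) = p v \<and> g v u = reversepath (g u v)"
    using conjunct1[OF conjunct2[OF pdu]] .
  have pd3: "\<forall>u v w. E u v \<and> w \<in> V \<and> w \<noteq> u \<and> w \<noteq> v \<longrightarrow> p w \<notin> path_image (g u v)"
    using conjunct1[OF conjunct2[OF conjunct2[OF pdu]]] .
  have pd4: "\<forall>u v x y. E u v \<and> E x y \<and> {u, v} \<noteq> {x, y} \<longrightarrow>
           path_image (g u v) \<inter> path_image (g x y) \<subseteq> p ` ({u, v} \<inter> {x, y})"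
    using conjunct2[OF conjunct2[OF conjunct2[OF pdu]]] .
  have pd': "plane_drawing W (res E W) p g"
    unfolding plane_drawing_def
  proof (intro conjI)
    show "inj_on p W" using inj_on_subset[OF pd1 assms(2)] .
    show "\<forall>u v. res E W u v \<longrightarrow> arc (g u v) \<and> pathstart (g u v) = p u \<and> pathfinish (g u v) = p v \<and> g v u = reversepath (g u v)"
    proof (intro allI impI)
      fix u v assume "res E W u v"
      then have "E u v" unfolding res_def by simp
      then show "arc (g u v) \<and> pathstart (g u v) = p u \<and> pathfinish (g u v) = p v \<and> g v u = reversepath (g u v)"
        using pd2 by blast
    qed
    show "\<forall>u v w. res E W u v \<and> w \<in> W \<and> w \<noteq> u \<and> w \<noteq> v \<longrightarrow> p w \<notin> path_image (g u v)"
    proof (intro allI impI)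
      fix u v w assume h: "res E W u v \<and> w \<in> W \<and> w \<noteq> u \<and> w \<noteq> v"
      then have "E u v" "w \<in> V" "w \<noteq> u" "w \<noteq> v" using assms(2) unfolding res_def by auto
      then show "p w \<notin> path_image (g u v)" using pd3 by blast
    qed
    show "\<forall>u v x y. res E W u v \<and> res E W x y \<and> {u, v} \<noteq> {x, y} \<longrightarrow>
        path_image (g u v) \<inter> path_image (g x y) \<subseteq> p ` ({u, v} \<inter> {x, y})"
    proof (intro allI impI)
      fix u v x y assume h: "res E W u v \<and> res E W x y \<and> {u, v} \<noteq> {x, y}"
      then have "E u v" "E x y" "{u, v} \<noteq> {x, y}" unfolding res_def by auto
      then show "path_image (g u v) \<inter> path_image (g x y) \<subseteq> p ` ({u, v} \<inter> {x, y})"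
        using pd4 by blast
    qed
  qed
  have "drawing_set W (res E W) p g \<subseteq> drawing_set V E p g"
    unfolding drawing_set_def
  proof (rule Un_mono)
    show "p ` W \<subseteq> p ` V" using assms(2) by (rule image_mono)
    show "\<Union> {path_image (g u v) |u v. res E W u v} \<subseteq> \<Union> {path_image (g u v) |u v. E u v}"
      by (rule Union_mono) (auto simp: res_def)
  qed
  then have "closure (outside (drawing_set V E p g)) \<subseteq> closure (outside (drawing_set W (res E W) p g))"
    by (intro closure_mono outside_mono)
  then have "\<forall>v\<in>W. p v \<in> closure (outside (drawing_set W (res E W) p g))"
    using ou assms(2) by blast
  then show ?thesis unfolding outerplanar_def using sg' pd' by blast
qed

lemma girth_res:
  assumes "girth_at_least V E k" "W \<subseteq> V"
  shows "girth_at_least W (res E W) k"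
  unfolding girth_at_least_def
proof (intro allI impI)
  fix cs assume c: "is_cycle W (res E W) cs"
  have "is_cycle V E cs" using c assms(2) unfolding is_cycle_def res_def by auto
  then show "k \<le> length cs" using assms(1) unfolding girth_at_least_def by blast
qed

abbreviation cadj :: "nat \<Rightarrow> nat \<Rightarrow> nat \<Rightarrow> bool" where "cadj \<equiv> cycle_graph_adj"

lemma cadj_sym: "cadj N x y \<Longrightarrow> cadj N y x"
  unfolding cycle_graph_adj_def by blast

lemma cadj_lt: "cadj N x y \<Longrightarrow> x < N \<and> y < N"
  unfolding cycle_graph_adj_def by blast

lemma cadj_succ: "x < N \<Longrightarrow> cadj N ((x+1) mod N) x"
  unfolding cycle_graph_adj_def by auto

lemma cadj_rot:
  assumes "cadj N x y"
  shows "cadj N ((x + c) mod N) ((y + c) mod N)"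
proof -
  have N: "N > 0" using assms unfolding cycle_graph_adj_def by auto
  have key: "(b + c) mod N = ((a + c) mod N + 1) mod N" if "b = (a+1) mod N" for a b
  proof -
    have "(b + c) mod N = ((a+1) mod N + c) mod N" using that by simp
    also have "\<dots> = (a + 1 + c) mod N" by (rule mod_add_left_eq)
    also have "\<dots> = ((a + c) + 1) mod N" by (simp add: algebra_simps)
    also have "\<dots> = ((a + c) mod N + 1) mod N" by (rule mod_add_left_eq[symmetric])
    finally show ?thesis .
  qed
  show ?thesis using assms N key unfolding cycle_graph_adj_def by auto
qed

lemma walk_odd:
  assumes "cadj N x y" "odd L"
  shows "\<exists>h. h 0 = x \<and> h L = y \<and> (\<forall>t<L. cadj N (h t) (h (Suc t)))"
proof (intro exI[of _ "\<lambda>t. if even t then x else y"] conjI allI impI)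
  fix t assume "t < L"
  show "cadj N (if even t then x else y) (if even (Suc t) then x else y)"
    using assms(1) cadj_sym by auto
qed (use assms in auto)

lemma walk_long_aux:
  assumes k: "k \<ge> 1" and N: "N = 2*k+1" and xy: "y = (x+1) mod N" "x < N" and L: "even L" "L \<ge> 2*k"
  shows "\<exists>h. h 0 = x \<and> h L = y \<and> (\<forall>t<L. cadj N (h t) (h (Suc t)))"
proof -
  define s where "s = L - 2*k"
  have es: "even s" using L unfolding s_def by simp
  define h where "h t = (if t < s then (if even t then x else y) else (x + N - (t - s)) mod N)" for t
  have h0: "h 0 = x"
  proof (cases "s = 0")
    case True then show ?thesis unfolding h_def using xy by simp
  next
    case False then show ?thesis unfolding h_def by simp
  qed
  have hL: "h L = y"
  proof -
    have "\<not> L < s" unfolding s_def by simp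
    then have "h L = (x + N - 2*k) mod N" unfolding h_def s_def using L by simp
    also have "x + N - 2*k = x + 1" using N by simp
    finally show ?thesis using xy by simp
  qed
  have xy': "cadj N y x" using cadj_succ[OF xy(2)] xy(1) by simp
  have steps: "cadj N (h t) (h (Suc t))" if t: "t < L" for t
  proof (cases "Suc t < s")
    case True
    then show ?thesis unfolding h_def using xy' cadj_sym[OF xy'] by auto
  next
    case False
    show ?thesis
    proof (cases "t < s")
      case True
      then have "Suc t = s" using False by simp
      then have "odd t" using es by (metis even_Suc)
      then have "h t = y" unfolding h_def using True by simp
      moreover have "h (Suc t) = x" unfolding h_def using \<open>Suc t = s\<close> xy by simp
      ultimately show ?thesis using xy' by simp
    next
      case False
      have ts: "t - s < 2*k" using t False L(2) unfolding s_def by linarith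
      have a: "h t = (x + N - (t - s)) mod N" unfolding h_def using False by simp
      have b: "h (Suc t) = (x + N - (t - s) - 1) mod N" unfolding h_def using False
        by (simp add: Suc_diff_le not_less)
      have pos: "x + N - (t - s) \<ge> 1" using ts N by simp
      have e: "x + N - (t - s) - 1 + 1 = x + N - (t - s)" using pos by simp
      have "h t = ((x + N - (t - s) - 1) + 1) mod N" using a e by metis
      then have "h t = (h (Suc t) + 1) mod N" using b by (simp add: mod_Suc_eq)
      then show ?thesis using cadj_succ[of "h (Suc t)" N] N b by simp
    qed
  qed
  show ?thesis using h0 hL steps by blast
qed

lemma walk_exists:
  assumes k: "k \<ge> 1" and N: "N = 2*k+1" and xy: "cadj N x y" and L: "L \<ge> 1" "odd L \<or> L \<ge> 2*k"
  shows "\<exists>h. h 0 = x \<and> h L = y \<and> (\<forall>t<L. cadj N (h t) (h (Suc t)))"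
proof (cases "odd L")
  case True then show ?thesis using walk_odd[OF xy] by blast
next
  case False
  then have eL: "even L" "L \<ge> 2*k" using L by auto
  have xyN: "x < N" "y < N" using cadj_lt[OF xy] by auto
  show ?thesis
  proof (cases "y = (x+1) mod N")
    case True
    then show ?thesis using walk_long_aux[OF k N True xyN(1) eL] by blast
  next
    case False
    then have yx: "x = (y+1) mod N" using xy unfolding cycle_graph_adj_def by blast
    obtain h where h: "h 0 = y" "h L = x" "\<forall>t<L. cadj N (h t) (h (Suc t))"
      using walk_long_aux[OF k N yx xyN(2) eL] by blast
    define h' where "h' t = h (L - t)" for t
    have "\<forall>t<L. cadj N (h' t) (h' (Suc t))"
    proof (intro allI impI)
      fix t assume t: "t < L"
      have "cadj N (h (L - Suc t)) (h (Suc (L - Suc t)))" using h(3) t by simp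
      moreover have "Suc (L - Suc t) = L - t" using t by simp
      ultimately show "cadj N (h' t) (h' (Suc t))" unfolding h'_def using cadj_sym by simp
    qed
    moreover have "h' 0 = x" "h' L = y" unfolding h'_def using h by auto
    ultimately show ?thesis by blast
  qed
qed

lemma hom_pendant:
  assumes sg: "simple_graph V E" and v: "v \<in> V" and deg: "\<forall>u1 u2. E v u1 \<and> E v u2 \<longrightarrow> u1 = u2"
    and N: "N \<ge> 1"
    and f': "graph_hom (V - {v}) (res E (V - {v})) {0..<N} (cadj N) f'"
  shows "\<exists>f. graph_hom V E {0..<N} (cadj N) f"
proof -
  define f where "f = f'(v := (if \<exists>u. E v u then (f' (SOME u. E v u) + 1) mod N else 0))"
  have EV: "\<And>a b. E a b \<Longrightarrow> a \<in> V \<and> b \<in> V \<and> a \<noteq> b \<and> E b a"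
    using sg unfolding simple_graph_def by blast
  have key: "cadj N (f v) (f u)" if e: "E v u" for u
  proof -
    have ex: "\<exists>u. E v u" using e by blast
    have su: "(SOME u. E v u) = u" using deg e someI_ex[OF ex] by blast
    have uv: "u \<noteq> v" "u \<in> V" using EV[OF e] by auto
    then have fu: "f u = f' u" "f' u < N" using f' unfolding f_def graph_hom_def by auto
    have "f v = (f' u + 1) mod N" unfolding f_def using ex su by simp
    then show ?thesis using cadj_succ[OF fu(2)] fu by simp
  qed
  have "graph_hom V E {0..<N} (cadj N) f"
    unfolding graph_hom_def
  proof (intro conjI ballI allI impI)
    fix x assume x: "x \<in> V"
    show "f x \<in> {0..<N}"
    proof (cases "x = v")
      case True then show ?thesis unfolding f_def using N by auto
    next
      case False then show ?thesis using f' x unfolding f_def graph_hom_def by auto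
    qed
  next
    fix a b assume e: "E a b"
    show "cadj N (f a) (f b)"
    proof (cases "a = v")
      case True then show ?thesis using key e by simp
    next
      case False
      show ?thesis
      proof (cases "b = v")
        case True then show ?thesis using key[of a] EV[OF e] cadj_sym by simp
      next
        case False
        then have "res E (V - {v}) a b" using \<open>a \<noteq> v\<close> e EV[OF e] unfolding res_def by auto
        then show ?thesis using f' \<open>a \<noteq> v\<close> False unfolding graph_hom_def f_def by auto
      qed
    qed
  qed
  then show ?thesis by blast
qed

lemma hom_glue:
  assumes VXY: "V = X \<union> Y" and XY: "X \<inter> Y \<subseteq> {v}"
    and sep: "\<forall>x y. E x y \<longrightarrow> (x \<in> X \<and> y \<in> X) \<or> (x \<in> Y \<and> y \<in> Y)"
    and f1: "graph_hom X (res E X) {0..<N} (cadj N) f1"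
    and f2: "graph_hom Y (res E Y) {0..<N} (cadj N) f2"
    and N: "N \<ge> 1"
  shows "\<exists>f. graph_hom V E {0..<N} (cadj N) f"
proof -
  define c where "c = N - f2 v + f1 v"
  define f where "f z = (if z \<in> X then f1 z else (f2 z + c) mod N)" for z
  have fY: "f z = (f2 z + c) mod N" if z: "z \<in> Y" for z
  proof (cases "z \<in> X")
    case True
    then have zv: "z = v" "v \<in> X" "v \<in> Y" using XY z by auto
    then have "f1 v < N" "f2 v < N" using f1 f2 unfolding graph_hom_def by auto
    then have "(f2 v + c) mod N = f1 v" unfolding c_def by simp
    then show ?thesis unfolding f_def using zv by simp
  next
    case False then show ?thesis unfolding f_def by simp
  qed
  have "graph_hom V E {0..<N} (cadj N) f"
    unfolding graph_hom_def
  proof (intro conjI ballI allI impI)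
    fix x assume "x \<in> V"
    then show "f x \<in> {0..<N}" using f1 N unfolding f_def graph_hom_def VXY by auto
  next
    fix a b assume e: "E a b"
    show "cadj N (f a) (f b)"
    proof (cases "a \<in> X \<and> b \<in> X")
      case True
      then have "res E X a b" using e unfolding res_def by simp
      then show ?thesis using f1 True unfolding graph_hom_def f_def by auto
    next
      case False
      then have ab: "a \<in> Y" "b \<in> Y" using sep e by blast+
      then have "res E Y a b" using e unfolding res_def by simp
      then have "cadj N (f2 a) (f2 b)" using f2 unfolding graph_hom_def by auto
      then show ?thesis using cadj_rot fY ab by metis
    qed
  qed
  then show ?thesis by blast
qed



lemma wpath_take: "wpath E xs \<Longrightarrow> wpath E (take n xs)"
  unfolding wpath_nth by auto

lemma wpath_mono: "wpath R xs \<Longrightarrow> (\<And>a b. R a b \<Longrightarrow> S a b) \<Longrightarrow> wpath S xs"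
  unfolding wpath_nth by blast

lemma hom_ear:
  assumes sg: "simple_graph V E" and k: "k \<ge> 1" and N: "N = 2*k+1"
    and P: "distinct P" "length P \<ge> 3" "set P \<subseteq> V" "wpath E P" "E (last P) (hd P)" "length P \<ge> 2*k"
    and int: "\<forall>t. 0 < t \<and> t < length P - 1 \<longrightarrow> (\<forall>y. E (P!t) y \<longrightarrow> y = P!(t-1) \<or> y = P!Suc t)"
    and I: "I = {P!t | t. 0 < t \<and> t < length P - 1}"
    and f': "graph_hom (V - I) (res E (V - I)) {0..<N} (cadj N) f'"
  shows "\<exists>f. graph_hom V E {0..<N} (cadj N) f"
proof -
  define L where "L = length P - 1"
  have L: "L \<ge> 2" "Suc L = length P" using P(2) unfolding L_def by auto
  have Pne: "P \<noteq> []" using P(2) by auto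
  have hdP: "hd P = P!0" and lastP: "last P = P!L" using Pne unfolding L_def by (auto simp: hd_conv_nth last_conv_nth)
  have EV: "\<And>a b. E a b \<Longrightarrow> a \<in> V \<and> b \<in> V \<and> a \<noteq> b \<and> E b a"
    using sg unfolding simple_graph_def by blast
  have dist: "\<And>i j. i < length P \<Longrightarrow> j < length P \<Longrightarrow> P!i = P!j \<Longrightarrow> i = j"
    using nth_eq_iff_index_eq[OF P(1)] by blast
  have inI: "P!t \<in> I \<longleftrightarrow> 0 < t \<and> t < L" if t: "t \<le> L" for t
  proof
    assume "P!t \<in> I"
    then obtain t' where t': "P!t = P!t'" "0 < t'" "t' < length P - 1" unfolding I by blast
    then have "t = t'" using dist t L unfolding L_def by simp
    then show "0 < t \<and> t < L" using t' unfolding L_def by simp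
  next
    assume "0 < t \<and> t < L" then show "P!t \<in> I" unfolding I L_def by blast
  qed
  have IP: "I \<subseteq> set P" unfolding I by auto
  have a: "P!0 \<notin> I" "P!L \<notin> I" using inI by auto
  have l0: "0 < length P" "L < length P" using L by linarith+
  have aV: "P!0 \<in> V" "P!L \<in> V" using P(3) nth_mem[OF l0(1)] nth_mem[OF l0(2)] by auto
  have "res E (V - I) (P!L) (P!0)" using P(5) hdP lastP a aV unfolding res_def by simp
  then have "cadj N (f' (P!L)) (f' (P!0))" using f' unfolding graph_hom_def by blast
  then have ab: "cadj N (f' (P!0)) (f' (P!L))" by (rule cadj_sym)
  have Lc1: "L \<ge> 1" using L by simp
  have Lc2: "odd L \<or> L \<ge> 2*k"
  proof (cases "L \<ge> 2*k")
    case False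
    then have "L = 2*k - 1" using P(6) L(2) by linarith
    then have "odd L" using k by simp
    then show ?thesis by simp
  qed simp
  note Lc = Lc1 Lc2
  obtain h where h: "h 0 = f' (P!0)" "h L = f' (P!L)" "\<forall>t<L. cadj N (h t) (h (Suc t))"
    using walk_exists[OF k N ab Lc] by blast
  define ix where "ix z = (THE t. t < length P \<and> P!t = z)" for z
  have ix: "ix (P!t) = t" if "t < length P" for t
    unfolding ix_def using dist that by (intro the_equality) auto
  define f where "f z = (if z \<in> set P then h (ix z) else f' z)" for z
  have fP: "f (P!t) = h t" if "t \<le> L" for t
    unfolding f_def using ix[of t] that L by simp
  have fnI: "f z = f' z" if "z \<notin> I" for z
  proof (cases "z \<in> set P")
    case True
    then obtain t where t: "t < length P" "z = P!t" by (metis in_set_conv_nth)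
    then have "t \<le> L" using L by simp
    then have "t = 0 \<or> t = L" using inI[of t] that t by auto
    then show ?thesis using fP t h \<open>t \<le> L\<close> by auto
  next
    case False then show ?thesis unfolding f_def by simp
  qed
  have hN: "h t < N" if "t \<le> L" for t
  proof (cases "t < L")
    case True then show ?thesis using h(3) cadj_lt by blast
  next
    case False
    then have "t = L" using that by simp
    moreover have "f' (P!L) < N" using f' a aV unfolding graph_hom_def by auto
    ultimately show ?thesis using h by simp
  qed
  have edgeI: "cadj N (f x) (f y)" if e: "E x y" and x: "x \<in> I" for x y
  proof -
    obtain t where t: "x = P!t" "0 < t" "t < L" using x unfolding I L_def by blast
    then have "y = P!(t-1) \<or> y = P!Suc t" using int e unfolding L_def by blast
    then show ?thesis
    proof
      assume y: "y = P!(t-1)"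
      have "t - 1 < L" using t by simp
      then have "cadj N (h (t-1)) (h (Suc (t-1)))" using h(3) by blast
      moreover have "Suc (t-1) = t" using t by simp
      ultimately have "cadj N (h (t-1)) (h t)" by simp
      then show ?thesis using fP[of t] fP[of "t-1"] t y cadj_sym by simp
    next
      assume y: "y = P!Suc t"
      have "cadj N (h t) (h (Suc t))" using h(3) t by simp
      then show ?thesis using fP[of t] fP[of "Suc t"] t y by simp
    qed
  qed
  have "graph_hom V E {0..<N} (cadj N) f"
    unfolding graph_hom_def
  proof (intro conjI ballI allI impI)
    fix z assume z: "z \<in> V"
    show "f z \<in> {0..<N}"
    proof (cases "z \<in> I")
      case True
      then obtain t where t: "z = P!t" "0 < t" "t < L" unfolding I L_def by blast
      then show ?thesis using fP hN by simp
    next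
      case False then show ?thesis using fnI f' z unfolding graph_hom_def by simp
    qed
  next
    fix x y assume e: "E x y"
    show "cadj N (f x) (f y)"
    proof (cases "x \<in> I")
      case True then show ?thesis using edgeI e by blast
    next
      case False
      show ?thesis
      proof (cases "y \<in> I")
        case True then show ?thesis using edgeI[of y x] EV[OF e] cadj_sym by blast
      next
        case yI: False
        have "res E (V - I) x y" using e EV[OF e] False yI unfolding res_def by simp
        then show ?thesis using f' fnI False yI unfolding graph_hom_def by simp
      qed
    qed
  qed
  then show ?thesis by blast
qed

lemma rtranclp_path:
  assumes "R\<^sup>*\<^sup>* x y"
  shows "\<exists>xs. xs \<noteq> [] \<and> hd xs = x \<and> last xs = y \<and> distinct xs \<and> wpath R xs \<and> set xs \<subseteq> {z. R\<^sup>*\<^sup>* x z}"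
  using assms
proof (induction rule: rtranclp_induct)
  case base
  then show ?case by (intro exI[of _ "[x]"]) simp
next
  case (step y z)
  then obtain xs where xs: "xs \<noteq> []" "hd xs = x" "last xs = y" "distinct xs" "wpath R xs" "set xs \<subseteq> {z. R\<^sup>*\<^sup>* x z}"
    by blast
  show ?case
  proof (cases "z \<in> set xs")
    case True
    then obtain i where i: "i < length xs" "xs!i = z" by (metis in_set_conv_nth)
    let ?ys = "take (Suc i) xs"
    have "?ys = take i xs @ [xs!i]" using i by (simp add: take_Suc_conv_app_nth)
    then have "last ?ys = z" using i by simp
    moreover have "?ys \<noteq> []" "hd ?ys = x" using xs by auto
    moreover have "distinct ?ys" using xs by simp
    moreover have "wpath R ?ys" using wpath_take xs by blast
    moreover have "set ?ys \<subseteq> {z. R\<^sup>*\<^sup>* x z}" using xs set_take_subset by fastforce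
    ultimately show ?thesis by blast
  next
    case False
    let ?ys = "xs @ [z]"
    have "wpath R ?ys" using xs step by (simp add: wpath_append)
    moreover have "?ys \<noteq> []" "hd ?ys = x" "last ?ys = z" "distinct ?ys" using xs False by auto
    moreover have "set ?ys \<subseteq> {z. R\<^sup>*\<^sup>* x z}" using xs step by auto
    ultimately show ?thesis by blast
  qed
qed

lemma distinct_len_le:
  assumes "finite V" "distinct xs" "set xs \<subseteq> V"
  shows "length xs \<le> card V"
  using card_mono[OF assms(1,3)] distinct_card[OF assms(2)] by simp

lemma exists_cycle:
  assumes sg: "simple_graph V E" and ne: "V \<noteq> {}"
    and deg: "\<forall>v\<in>V. \<exists>u1 u2. E v u1 \<and> E v u2 \<and> u1 \<noteq> u2"
  shows "\<exists>cs. is_cycle V E cs"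
proof -
  have fin: "finite V" using sg unfolding simple_graph_def by blast
  have EV: "\<And>a b. E a b \<Longrightarrow> a \<in> V \<and> b \<in> V \<and> a \<noteq> b \<and> E b a"
    using sg unfolding simple_graph_def by blast
  define Q where "Q xs \<longleftrightarrow> xs \<noteq> [] \<and> distinct xs \<and> set xs \<subseteq> V \<and> wpath E xs" for xs
  obtain v where v: "v \<in> V" using ne by blast
  have Qv: "Q [v]" unfolding Q_def using v by simp
  have bd: "\<forall>xs. Q xs \<longrightarrow> length xs < card V + 1"
    using distinct_len_le[OF fin] unfolding Q_def by fastforce
  obtain xs where xs: "Q xs" and mx: "\<forall>ys. Q ys \<longrightarrow> length ys \<le> length xs"
    using ex_has_greatest_nat[OF Qv bd] by blast
  have xsne: "xs \<noteq> []" and dxs: "distinct xs" and sxs: "set xs \<subseteq> V" and wxs: "wpath E xs"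
    using xs unfolding Q_def by auto
  let ?x = "hd xs"
  have xV: "?x \<in> V" using sxs xsne by auto
  have x0: "xs!0 = ?x" using xsne by (simp add: hd_conv_nth)
  have inxs: "u \<in> set xs" if e: "E ?x u" for u
  proof (rule ccontr)
    assume nu: "u \<notin> set xs"
    have "wpath E (u # xs)" using wxs xsne e EV[OF e] by (cases xs) auto
    then have "Q (u # xs)" unfolding Q_def using dxs sxs nu EV[OF e] by auto
    then show False using mx by fastforce
  qed
  obtain u1 u2 where u: "E ?x u1" "E ?x u2" "u1 \<noteq> u2" using deg xV by blast
  obtain j1 where j1: "j1 < length xs" "xs!j1 = u1" using inxs[OF u(1)] by (metis in_set_conv_nth)
  obtain j2 where j2: "j2 < length xs" "xs!j2 = u2" using inxs[OF u(2)] by (metis in_set_conv_nth)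
  have "j1 \<noteq> 0"
  proof
    assume "j1 = 0" then have "u1 = ?x" using j1 x0 by simp
    then show False using EV[OF u(1)] by simp
  qed
  moreover have "j2 \<noteq> 0"
  proof
    assume "j2 = 0" then have "u2 = ?x" using j2 x0 by simp
    then show False using EV[OF u(2)] by simp
  qed
  moreover have "j1 \<noteq> j2" using j1 j2 u(3) by auto
  ultimately obtain j where j: "j \<ge> 2" "j < length xs" "E ?x (xs!j)"
    using j1 j2 u by (metis One_nat_def less_2_cases not_le)
  let ?cs = "take (Suc j) xs"
  have "is_cycle V E ?cs"
    unfolding is_cycle_alt
  proof (intro conjI)
    show "3 \<le> length ?cs" using j by simp
    show "distinct ?cs" using dxs by simp
    show "set ?cs \<subseteq> V" using sxs set_take_subset by fastforce
    show "wpath E ?cs" using wpath_take wxs by blast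
    have "?cs = take j xs @ [xs!j]" using j by (simp add: take_Suc_conv_app_nth)
    then have "last ?cs = xs!j" by simp
    moreover have "hd ?cs = ?x" by simp
    ultimately show "E (last ?cs) (hd ?cs)" using EV[OF j(3)] by simp
  qed
  then show ?thesis by blast
qed

lemma longest_cycle:
  assumes sg: "simple_graph V E" and ex: "is_cycle V E cs0"
  shows "\<exists>cs. is_cycle V E cs \<and> (\<forall>cs'. is_cycle V E cs' \<longrightarrow> length cs' \<le> length cs)"
proof -
  have fin: "finite V" using sg unfolding simple_graph_def by blast
  have bd: "\<forall>cs. is_cycle V E cs \<longrightarrow> length cs < card V + 1"
    using distinct_len_le[OF fin] unfolding is_cycle_def by fastforce
  show ?thesis using ex_has_greatest_nat[OF ex bd] by blast
qed

lemma longer_cycle: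
  assumes cyc: "is_cycle V E cs" and sym: "\<forall>a b. E a b \<longrightarrow> E b a"
    and x: "x < length cs" and y: "y = (x+1) mod length cs"
    and M: "M \<noteq> []" "distinct M" "set M \<inter> set cs = {}" "set M \<subseteq> V"
    and w: "wpath E (cs!x # M @ [cs!y])"
  shows "is_cycle V E (cpath cs y (length cs - 1) @ M)" "length (cpath cs y (length cs - 1) @ M) > length cs"
proof -
  let ?n = "length cs"
  let ?C = "cpath cs y (?n - 1)"
  have n3: "?n \<ge> 3" and dcs: "distinct cs" and scs: "set cs \<subseteq> V" using cyc unfolding is_cycle_def by auto
  have n0: "?n > 0" using n3 by linarith
  have yn: "y < ?n" using y n0 by simp
  have lenC: "length ?C = ?n" using n3 by simp
  have dC: "distinct ?C" using cpath_distinct[OF dcs] n3 by simp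
  have wC: "wpath E ?C" using cpath_wpath[OF cyc] .
  have "hd ?C = cs ! (y mod ?n)" by (rule cpath_hd)
  then have hdC: "hd ?C = cs!y" using yn by simp
  have "(y + (?n - 1)) mod ?n = x"
  proof -
    have "(y + (?n - 1)) mod ?n = ((x+1) mod ?n + (?n - 1)) mod ?n" using y by simp
    also have "\<dots> = (x + 1 + (?n - 1)) mod ?n" by (rule mod_add_left_eq)
    also have "x + 1 + (?n - 1) = x + ?n" using n3 by simp
    finally show ?thesis using x by simp
  qed
  then have lastC: "last ?C = cs!x" using cpath_last[of cs y "?n - 1"] by simp
  have sC: "set ?C \<subseteq> set cs" unfolding cpath_def using n0 by (auto intro!: nth_mem)
  have Cne: "?C \<noteq> []" using lenC n0 by (metis length_0_conv less_not_refl)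
  have w1: "wpath E M" "E (cs!x) (hd M)" "E (last M) (cs!y)"
  proof -
    have "wpath E ([cs!x] @ (M @ [cs!y]))" using w by simp
    then have "wpath E (M @ [cs!y])" "E (cs!x) (hd (M @ [cs!y]))" unfolding wpath_append using M by auto
    then show "wpath E M" "E (cs!x) (hd M)" "E (last M) (cs!y)" unfolding wpath_append using M by auto
  qed
  show "is_cycle V E (?C @ M)"
    unfolding is_cycle_alt
  proof (intro conjI)
    show "3 \<le> length (?C @ M)" using lenC n3 by simp
    show "distinct (?C @ M)" using dC M sC by auto
    show "set (?C @ M) \<subseteq> V" using sC scs M by auto
    show "wpath E (?C @ M)" unfolding wpath_append using wC w1 lastC by simp
    show "E (last (?C @ M)) (hd (?C @ M))" using w1 hdC M Cne by simp
  qed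
  show "length (?C @ M) > ?n" using lenC M by simp
qed



lemma cpath_subset: "cs \<noteq> [] \<Longrightarrow> set (cpath cs i L) \<subseteq> set cs"
  unfolding cpath_def by (auto intro!: nth_mem)

context odraw
begin

lemma bridge_aux:
  assumes cyc: "is_cycle V E cs" and longest: "\<forall>cs'. is_cycle V E cs' \<longrightarrow> length cs' \<le> length cs"
    and ij: "i < j" "j < length cs"
    and M: "M \<noteq> []" "distinct M" "set M \<inter> set cs = {}" "set M \<subseteq> V"
    and w: "wpath E (cs!i # M @ [cs!j])"
  shows False
proof -
  let ?n = "length cs"
  have sym: "\<forall>a b. E a b \<longrightarrow> E b a" using E_sym by blast
  have n3: "?n \<ge> 3" and dcs: "distinct cs" using cyc unfolding is_cycle_def by auto
  have csne: "cs \<noteq> []" using n3 by auto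
  show False
  proof (cases "j = i + 1")
    case True
    have y: "j = (i+1) mod ?n" using True ij by simp
    from longer_cycle[OF cyc sym _ y M w] ij longest show False by fastforce
  next
    case False
    show False
    proof (cases "i = 0 \<and> j = ?n - 1")
      case True
      have "j + 1 = ?n" using True n3 by simp
      then have y: "i = (j+1) mod ?n" using True by simp
      have w': "wpath E (cs!j # rev M @ [cs!i])"
      proof -
        have "rev (cs!i # M @ [cs!j]) = cs!j # rev M @ [cs!i]" by simp
        then show ?thesis using wpath_rev[OF sym, of "cs!i # M @ [cs!j]"] w by simp
      qed
      have M': "rev M \<noteq> []" "distinct (rev M)" "set (rev M) \<inter> set cs = {}" "set (rev M) \<subseteq> V" using M by auto
      from longer_cycle[OF cyc sym _ y M' w'] ij longest show False by fastforce
    next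
      case False2: False
      have ij2: "i < j" "j < ?n" "2 \<le> j - i" "2 \<le> ?n - (j - i)" using ij False False2 by auto
      define P1 where "P1 = cpath cs i (j-i)"
      define P2 where "P2 = cpath cs j (?n - (j-i))"
      note ct = cycle_theta[OF cyc ij2, folded P1_def P2_def]
      let ?a = "cs!i" and ?b = "cs!j"
      let ?Z = "?a # M @ [?b]"
      have ab: "?a \<noteq> ?b" using nth_eq_iff_index_eq[OF dcs] ij by auto
      have abcs: "?a \<in> set cs" "?b \<in> set cs" using ij by auto
      have abM: "?a \<notin> set M" "?b \<notin> set M" using abcs M(3) by auto
      have sP1: "set P1 \<subseteq> set cs" unfolding P1_def using cpath_subset[OF csne] .
      have sP2: "set P2 \<subseteq> set cs" unfolding P2_def using cpath_subset[OF csne] .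
      have aP1: "?a \<in> set P1" "?b \<in> set P1" using ct(11)[of i] ct(11)[of j] ij by auto
      have aP2: "?a \<in> set P2" "?b \<in> set P2" using ct(12)[of i] ct(12)[of j] ij by auto
      have z: "wpath E ?Z" "distinct ?Z" "length ?Z \<ge> 3" "hd ?Z = ?a" "last ?Z = ?b"
        using w M ab abM by (auto simp: Suc_le_eq)
      have y: "wpath E (rev P2)" "distinct (rev P2)" "length (rev P2) \<ge> 3" "hd (rev P2) = ?a" "last (rev P2) = ?b"
        using ct(6-10) wpath_rev[OF sym] by (auto simp: hd_rev last_rev)
      have i12: "set P1 \<inter> set (rev P2) = {?a, ?b}" using ct(13) by simp
      have i13: "set P1 \<inter> set ?Z = {?a, ?b}"
      proof
        show "set P1 \<inter> set ?Z \<subseteq> {?a, ?b}" using sP1 M(3) by auto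
        show "{?a, ?b} \<subseteq> set P1 \<inter> set ?Z" using aP1 by simp
      qed
      have i23: "set (rev P2) \<inter> set ?Z = {?a, ?b}"
      proof
        show "set (rev P2) \<inter> set ?Z \<subseteq> {?a, ?b}" using sP2 M(3) by auto
        show "{?a, ?b} \<subseteq> set (rev P2) \<inter> set ?Z" using aP2 by simp
      qed
      show False using theta_graph[OF ab ct(1-5) y z i12 i13 i23] .
    qed
  qed
qed

lemma bridge_contra:
  assumes cyc: "is_cycle V E cs" and longest: "\<forall>cs'. is_cycle V E cs' \<longrightarrow> length cs' \<le> length cs"
    and u: "u \<in> set cs" "u' \<in> set cs" "u \<noteq> u'"
    and M: "M \<noteq> []" "distinct M" "set M \<inter> set cs = {}" "set M \<subseteq> V"
    and w: "wpath E (u # M @ [u'])"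
  shows False
proof -
  have sym: "\<forall>a b. E a b \<longrightarrow> E b a" using E_sym by blast
  obtain i where i: "i < length cs" "cs!i = u" using u(1) by (metis in_set_conv_nth)
  obtain j where j: "j < length cs" "cs!j = u'" using u(2) by (metis in_set_conv_nth)
  have "i \<noteq> j" using i j u(3) by auto
  then show False
  proof (cases "i < j")
    case True
    then show False using bridge_aux[OF cyc longest True j(1) M] w i j by simp
  next
    case False
    then have ji: "j < i" using \<open>i \<noteq> j\<close> by simp
    have w': "wpath E (u' # rev M @ [u])"
    proof -
      have "rev (u # M @ [u']) = u' # rev M @ [u]" by simp
      then show ?thesis using wpath_rev[OF sym, of "u # M @ [u']"] w by simp
    qed
    have M': "rev M \<noteq> []" "distinct (rev M)" "set (rev M) \<inter> set cs = {}" "set (rev M) \<subseteq> V" using M by auto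
    show False using bridge_aux[OF cyc longest ji i(1) M'] w' i j by simp
  qed
qed

lemma ham_ear:
  assumes cyc: "is_cycle V E cs" and Vcs: "V = set cs"
  shows "\<exists>P. distinct P \<and> length P \<ge> 3 \<and> set P \<subseteq> V \<and> wpath E P \<and> E (last P) (hd P) \<and>
     (\<forall>t. 0 < t \<and> t < length P - 1 \<longrightarrow> (\<forall>y. E (P!t) y \<longrightarrow> y = P!(t-1) \<or> y = P!Suc t))"
proof -
  let ?n = "length cs"
  have n3: "?n \<ge> 3" and dcs: "distinct cs" using cyc unfolding is_cycle_def by auto
  have csne: "cs \<noteq> []" using n3 by auto
  define chord where "chord ij \<longleftrightarrow> fst ij < snd ij \<and> snd ij < ?n \<and> 2 \<le> snd ij - fst ij \<and>
      \<not> (fst ij = 0 \<and> snd ij = ?n - 1) \<and> E (cs ! fst ij) (cs ! snd ij)" for ij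
  have nbr: "\<exists>m < ?n. y = cs!m" if "E x y" for x y
  proof -
    have "y \<in> V" using E_V[OF that] by blast
    then show ?thesis using Vcs by (metis in_set_conv_nth)
  qed
  have mkchord: "chord (min l m, max l m)"
    if l: "0 < l" "l < ?n - 1" and m: "m < ?n" and e: "E (cs!l) (cs!m)"
      and nm: "m \<noteq> l" "m \<noteq> l - 1" "m \<noteq> l + 1" for l m
  proof (cases "m < l")
    case True
    then show ?thesis unfolding chord_def using l m nm E_sym[OF e] by auto
  next
    case False
    then show ?thesis unfolding chord_def using l m nm e by auto
  qed
  show ?thesis
  proof (cases "\<exists>ij. chord ij")
    case False
    have "\<forall>t. 0 < t \<and> t < length cs - 1 \<longrightarrow> (\<forall>y. E (cs!t) y \<longrightarrow> y = cs!(t-1) \<or> y = cs!Suc t)"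
    proof (intro allI impI)
      fix t y assume t: "0 < t \<and> t < length cs - 1" and e: "E (cs!t) y"
      obtain m where m: "m < ?n" "y = cs!m" using nbr[OF e] by blast
      have "m \<noteq> t" using E_irr[OF e] m by auto
      show "y = cs!(t-1) \<or> y = cs!Suc t"
      proof (rule ccontr)
        assume "\<not> (y = cs!(t-1) \<or> y = cs!Suc t)"
        then have "m \<noteq> t - 1" "m \<noteq> t + 1" using m by auto
        then have "chord (min t m, max t m)" using mkchord[of t m] t m e \<open>m \<noteq> t\<close> by simp
        then show False using False by blast
      qed
    qed
    moreover have "wpath E cs" "E (last cs) (hd cs)" "set cs \<subseteq> V" using cyc unfolding is_cycle_alt by auto
    ultimately show ?thesis using n3 dcs by blast
  next
    case True
    then obtain ij0 where "chord ij0" by blast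
    then obtain ij where ij: "chord ij" and mn: "\<forall>ij'. chord ij' \<longrightarrow> snd ij - fst ij \<le> snd ij' - fst ij'"
      using ex_has_least_nat[of chord ij0 "\<lambda>ij. snd ij - fst ij"] by blast
    define i where "i = fst ij"
    define j where "j = snd ij"
    have c: "i < j" "j < ?n" "2 \<le> j - i" "\<not> (i = 0 \<and> j = ?n - 1)" "E (cs!i) (cs!j)"
      using ij unfolding chord_def i_def j_def by auto
    have mn': "\<And>a b. chord (a, b) \<Longrightarrow> j - i \<le> b - a" using mn unfolding i_def j_def by fastforce
    define P where "P = cpath cs i (j-i)"
    have Pn: "P!t = cs!(i+t)" if "t \<le> j - i" for t
    proof -
      have "P!t = cs!((i+t) mod ?n)" unfolding P_def by (rule cpath_nth[OF that])
      moreover have "i + t < ?n" using that c by simp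
      ultimately show ?thesis by simp
    qed
    have lenP: "length P = j - i + 1" unfolding P_def by simp
    have dP: "distinct P" unfolding P_def using cpath_distinct[OF dcs] c by simp
    have wP: "wpath E P" unfolding P_def using cpath_wpath[OF cyc] .
    have sP: "set P \<subseteq> V" unfolding P_def using cpath_subset[OF csne] Vcs by simp
    have "hd P = cs!(i mod ?n)" unfolding P_def by (rule cpath_hd)
    moreover have "i < ?n" using c by simp
    ultimately have hdP: "hd P = cs!i" by simp
    have lastP: "last P = cs!j"
    proof -
      have "last P = cs!((i + (j-i)) mod ?n)" unfolding P_def by (rule cpath_last)
      then show ?thesis using c by simp
    qed
    have eP: "E (last P) (hd P)" using hdP lastP E_sym[OF c(5)] by simp
    have int: "\<forall>t. 0 < t \<and> t < length P - 1 \<longrightarrow> (\<forall>y. E (P!t) y \<longrightarrow> y = P!(t-1) \<or> y = P!Suc t)"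
    proof (intro allI impI)
      fix t y assume t: "0 < t \<and> t < length P - 1" and e0: "E (P!t) y"
      define l where "l = i + t"
      have tl: "t < j - i" using t lenP by simp
      have Pt: "P!t = cs!l" using Pn[of t] tl unfolding l_def by simp
      have e: "E (cs!l) y" using e0 Pt by simp
      have l: "i < l" "l < j" "0 < l" "l < ?n - 1" using t tl c unfolding l_def by auto
      have Pt1: "P!(t-1) = cs!(l-1)" using Pn[of "t-1"] tl t unfolding l_def by simp
      have Pt2: "P!Suc t = cs!(l+1)" using Pn[of "Suc t"] tl unfolding l_def by simp
      obtain m where m: "m < ?n" "y = cs!m" using nbr[OF e] by blast
      have "m \<noteq> l" using E_irr[OF e] m by auto
      show "y = P!(t-1) \<or> y = P!Suc t"
      proof (rule ccontr)
        assume "\<not> (y = P!(t-1) \<or> y = P!Suc t)"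
        then have nm: "m \<noteq> l - 1" "m \<noteq> l + 1" using m Pt1 Pt2 by auto
        have ch: "chord (min l m, max l m)" using mkchord[of l m] l m e nm \<open>m \<noteq> l\<close> by simp
        have em: "E (cs!l) (cs!m)" using e m by simp
        show False
        proof (cases "m < l")
          case True
          show False
          proof (cases "i \<le> m")
            case True
            then have "j - i \<le> l - m" using mn'[of m l] ch \<open>m < l\<close> by (simp add: min_def max_def)
            then show False using True l \<open>m < l\<close> by linarith
          next
            case False
            show False using no_cross[OF cyc, of m i l j] False \<open>m < l\<close> l c E_sym[OF em] by simp
          qed
        next
          case False
          then have ml: "l < m" using \<open>m \<noteq> l\<close> by simp
          show False
          proof (cases "m \<le> j")
            case True
            then have "j - i \<le> m - l" using mn'[of l m] ch ml by (simp add: min_def max_def)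
            then show False using True l ml by linarith
          next
            case False
            show False using no_cross[OF cyc, of i l j m] False ml l c em m by simp
          qed
        qed
      qed
    qed
    have "length P \<ge> 3" using lenP c by simp
    then show ?thesis using dP sP wP eP int by blast
  qed
qed

end



lemma rtranclp_sym:
  assumes "R\<^sup>*\<^sup>* a b" "\<forall>x y. R x y \<longrightarrow> R y x"
  shows "R\<^sup>*\<^sup>* b a"
  using assms(1)
proof (induction rule: rtranclp_induct)
  case base then show ?case by simp
next
  case (step y z)
  then have "R z y" using assms(2) by blast
  then show ?case using step converse_rtranclp_into_rtranclp by metis
qed

lemma rtranclp_inv:
  assumes "R\<^sup>*\<^sup>* a b" "P a" "\<forall>x y. R x y \<longrightarrow> P y"
  shows "P b"
  using assms(1)
proof (induction rule: rtranclp_induct)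
  case base then show ?case using assms(2) by simp
next
  case (step y z) then show ?case using assms(3) by blast
qed

lemma main_step:
  fixes k :: nat and V :: "'a set" and E :: "'a \<Rightarrow> 'a \<Rightarrow> bool"
  assumes k: "k \<ge> 1"
  shows "outerplanar V E \<Longrightarrow> girth_at_least V E (2*k) \<Longrightarrow>
    \<exists>f. graph_hom V E {0..<2*k+1} (cycle_graph_adj (2*k+1)) f"
proof (induction "card V" arbitrary: V E rule: less_induct)
  case less
  define N where "N = 2*k+1"
  have N1: "N \<ge> 1" unfolding N_def by simp
  have sg: "simple_graph V E" using less.prems unfolding outerplanar_def by blast
  have fin: "finite V" using sg unfolding simple_graph_def by blast
  have EV: "\<And>a b. E a b \<Longrightarrow> a \<in> V \<and> b \<in> V \<and> a \<noteq> b \<and> E b a"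
    using sg unfolding simple_graph_def by blast
  have IH: "\<exists>f. graph_hom W (res E W) {0..<N} (cadj N) f" if W: "W \<subseteq> V" "W \<noteq> V" for W
  proof -
    have "card W < card V" using psubset_card_mono[OF fin] W by blast
    then show ?thesis using less.hyps[of W "res E W"] outerplanar_res[OF less.prems(1) W(1)]
        girth_res[OF less.prems(2) W(1)] unfolding N_def by blast
  qed
  have "\<exists>f. graph_hom V E {0..<N} (cadj N) f"
  proof (cases "V = {}")
    case True
    have "graph_hom V E {0..<N} (cadj N) (\<lambda>_. 0)"
      unfolding graph_hom_def using True EV by blast
    then show ?thesis by blast
  next
    case Vne: False
    show ?thesis
    proof (cases "\<exists>v\<in>V. \<forall>u1 u2. E v u1 \<and> E v u2 \<longrightarrow> u1 = u2")
      case True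
      then obtain v where v: "v \<in> V" "\<forall>u1 u2. E v u1 \<and> E v u2 \<longrightarrow> u1 = u2" by blast
      obtain f' where "graph_hom (V - {v}) (res E (V - {v})) {0..<N} (cadj N) f'"
        using IH[of "V - {v}"] v by blast
      then show ?thesis using hom_pendant[OF sg v(1) v(2) N1] by blast
    next
      case False
      then have deg: "\<forall>v\<in>V. \<exists>u1 u2. E v u1 \<and> E v u2 \<and> u1 \<noteq> u2" by blast
      obtain p g where od: "odraw V E p g"
        using less.prems(1) unfolding outerplanar_def odraw_def by blast
      obtain cs0 where "is_cycle V E cs0" using exists_cycle[OF sg Vne deg] by blast
      then obtain cs where cyc: "is_cycle V E cs" and longest: "\<forall>cs'. is_cycle V E cs' \<longrightarrow> length cs' \<le> length cs"
        using longest_cycle[OF sg] by blast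
      have n3: "length cs \<ge> 3" and dcs: "distinct cs" and scs: "set cs \<subseteq> V" using cyc unfolding is_cycle_def by auto
      show ?thesis
      proof (cases "\<exists>w\<in>V. w \<notin> set cs")
        case True
        then obtain w where w: "w \<in> V" "w \<notin> set cs" by blast
        define R where "R x y \<longleftrightarrow> E x y \<and> x \<notin> set cs \<and> y \<notin> set cs" for x y
        define K where "K = {x. R\<^sup>*\<^sup>* w x}"
        define Att where "Att = {c \<in> set cs. \<exists>x\<in>K. E x c}"
        have Rsym: "\<forall>x y. R x y \<longrightarrow> R y x" unfolding R_def using EV by blast
        have Kinv: "x \<in> V \<and> x \<notin> set cs" if "x \<in> K" for x
          using rtranclp_inv[of R w x "\<lambda>z. z \<in> V \<and> z \<notin> set cs"] that w EV unfolding K_def R_def by blast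
        have wK: "w \<in> K" unfolding K_def by simp
        have Kclos: "y \<in> K" if "x \<in> K" "R x y" for x y
          using that unfolding K_def by (simp add: rtranclp.rtrancl_into_rtrancl)
        show ?thesis
        proof (cases "\<exists>u u'. u \<in> Att \<and> u' \<in> Att \<and> u \<noteq> u'")
          case True
          then obtain u u' where uu: "u \<in> Att" "u' \<in> Att" "u \<noteq> u'" by blast
          obtain x where x: "x \<in> K" "E x u" "u \<in> set cs" using uu(1) unfolding Att_def by blast
          obtain x' where x': "x' \<in> K" "E x' u'" "u' \<in> set cs" using uu(2) unfolding Att_def by blast
          have "R\<^sup>*\<^sup>* x w" using rtranclp_sym[OF _ Rsym] x(1) unfolding K_def by blast
          then have "R\<^sup>*\<^sup>* x x'" using x'(1) unfolding K_def by simp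
          then obtain xs where xs: "xs \<noteq> []" "hd xs = x" "last xs = x'" "distinct xs" "wpath R xs"
            "set xs \<subseteq> {z. R\<^sup>*\<^sup>* x z}" using rtranclp_path by metis
          have xsK: "set xs \<subseteq> K"
          proof
            fix z assume "z \<in> set xs"
            then have "R\<^sup>*\<^sup>* x z" using xs(6) by blast
            moreover have "R\<^sup>*\<^sup>* w x" using x(1) unfolding K_def by simp
            ultimately show "z \<in> K" unfolding K_def by simp
          qed
          have M: "set xs \<inter> set cs = {}" "set xs \<subseteq> V" using xsK Kinv by blast+
          have wE: "wpath E xs" using wpath_mono[OF xs(5)] unfolding R_def by blast
          have "wpath E ([u] @ xs @ [u'])"
            unfolding wpath_append using wE xs EV[OF x(2)] x'(2) by simp
          then have "wpath E (u # xs @ [u'])" by simp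
          then show ?thesis
            using odraw.bridge_contra[OF od cyc longest x(3) x'(3) uu(3) xs(1) xs(4) M] by blast
        next
          case False
          then obtain v where Av: "Att \<subseteq> {v}" by blast
          define X where "X = K \<union> Att"
          define Y where "Y = V - K"
          have KV: "K \<subseteq> V" using Kinv by blast
          have AV: "Att \<subseteq> V" unfolding Att_def using scs by blast
          have VXY: "V = X \<union> Y" unfolding X_def Y_def using KV AV by blast
          have XY: "X \<inter> Y \<subseteq> {v}" unfolding X_def Y_def using Av by blast
          have sep: "\<forall>x y. E x y \<longrightarrow> (x \<in> X \<and> y \<in> X) \<or> (x \<in> Y \<and> y \<in> Y)"
          proof (intro allI impI)
            fix a b assume e: "E a b"
            show "(a \<in> X \<and> b \<in> X) \<or> (a \<in> Y \<and> b \<in> Y)"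
            proof (cases "a \<in> K")
              case aK: True
              show ?thesis
              proof (cases "b \<in> K")
                case True then show ?thesis using aK unfolding X_def by blast
              next
                case False
                then have "b \<in> set cs" using Kclos[OF aK] e Kinv[OF aK] unfolding R_def by blast
                then have "b \<in> Att" unfolding Att_def using aK e by blast
                then show ?thesis using aK unfolding X_def by blast
              qed
            next
              case aK: False
              show ?thesis
              proof (cases "b \<in> K")
                case bK: True
                have e': "E b a" using EV[OF e] by blast
                have "a \<in> set cs" using Kclos[OF bK] e' Kinv[OF bK] aK unfolding R_def by blast
                then have "a \<in> Att" unfolding Att_def using bK e' by blast
                then show ?thesis using bK unfolding X_def by blast
              next
                case False
                then show ?thesis using aK EV[OF e] unfolding Y_def by blast
              qed
            qed
          qed
          have XV: "X \<subseteq> V" "X \<noteq> V"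
          proof -
            show "X \<subseteq> V" using VXY by blast
            have l01: "0 < length cs" "1 < length cs" using n3 by linarith+
            have c01: "cs!0 \<in> set cs" "cs!1 \<in> set cs" "cs!0 \<noteq> cs!1"
              using nth_mem[OF l01(1)] nth_mem[OF l01(2)] nth_eq_iff_index_eq[OF dcs l01] by auto
            then obtain c where c: "c \<in> set cs" "c \<noteq> v" by metis
            then have "c \<notin> Att" using Av by blast
            moreover have "c \<notin> K" using Kinv c by blast
            ultimately have "c \<notin> X" unfolding X_def by blast
            then show "X \<noteq> V" using c scs by blast
          qed
          have YV: "Y \<subseteq> V" "Y \<noteq> V" unfolding Y_def using wK w by blast+
          obtain f1 where f1: "graph_hom X (res E X) {0..<N} (cadj N) f1" using IH[OF XV] by blast
          obtain f2 where f2: "graph_hom Y (res E Y) {0..<N} (cadj N) f2" using IH[OF YV] by blast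
          show ?thesis using hom_glue[OF VXY XY sep f1 f2 N1] .
        qed
      next
        case False
        then have Vcs: "V = set cs" using scs by blast
        obtain P where P: "distinct P" "length P \<ge> 3" "set P \<subseteq> V" "wpath E P" "E (last P) (hd P)"
          and int: "\<forall>t. 0 < t \<and> t < length P - 1 \<longrightarrow> (\<forall>y. E (P!t) y \<longrightarrow> y = P!(t-1) \<or> y = P!Suc t)"
          using odraw.ham_ear[OF od cyc Vcs] by blast
        have "is_cycle V E P" unfolding is_cycle_alt using P by blast
        then have P6: "length P \<ge> 2*k" using less.prems(2) unfolding girth_at_least_def by blast
        define I where "I = {P!t | t. 0 < t \<and> t < length P - 1}"
        have IV: "V - I \<subseteq> V" "V - I \<noteq> V"
        proof -
          show "V - I \<subseteq> V" by blast
          have "P!1 \<in> I" unfolding I_def using P(2) by force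
          moreover have "P!1 \<in> V" using P(2,3) nth_mem[of 1 P] by auto
          ultimately show "V - I \<noteq> V" by blast
        qed
        obtain f' where f': "graph_hom (V - I) (res E (V - I)) {0..<N} (cadj N) f'" using IH[OF IV] by blast
        show ?thesis using hom_ear[OF sg k N_def P P6 int I_def f'] .
      qed
    qed
  qed
  then show ?case unfolding N_def .
qed

theorem mainTheorem14:
  fixes V :: "'a set" and E :: "'a \<Rightarrow> 'a \<Rightarrow> bool" and k :: nat
  assumes "k \<ge> 1"
    and "outerplanar V E"
    and "girth_at_least V E (2 * k)"
  shows "\<exists>f. graph_hom V E {0..<2 * k + 1} (cycle_graph_adj (2 * k + 1)) f"
  using main_step[OF assms(1) assms(2,3)] .


end
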